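(* Under the hypotheses of Theorem 4.1 (with $\Lambda=(\lambda_1,\dots,\lambda_n)$, $P$, $v_0$, $R$, $\theta$, $a^0$ as there), let $v^\epsilon(t)$ be the solution of $\dot v_j+\mathbf{i}\lambda_jv_j=\epsilon P_j(v)$, $1\le j\le n$, $v(0)=v_0$. Then for every $j$, $$\sup_{|t|\le\epsilon^{-1}\theta}\big||v^\epsilon_j(t)|-|a^0_j(\epsilon t)|\big|\to0\quad\text{as }\epsilon\to0.$$
   Context: Theorem 4.1 setting: $\Lambda\in(\mathbb{R}\setminus\{0\})^n$; $P\in\mathrm{Lip}_{\mathcal{X}}(\mathbb{C}^n,\mathbb{C}^n)$, i.e. $P$ is continuous with $\sup_{B_r}|P|\le\mathcal{X}(r)$ and $\mathrm{Lip}(P|_{B_r})\le\mathcal{X}(r)$ for all $r\ge0$, for a non-decreasing continuous $\mathcal{X}:\mathbb{R}_+\to\mathbb{R}_+$; $|v_0|=R>0$, $\mathcal{X}(2R)>0$, $\theta=R/\mathcal{X}(2R)$; $a^0$ is the solution on $[-\theta,\theta]$ of $\partial_\tau a=\langle\langle P\rangle\rangle(a)$, $a(0)=v_0$, where $\langle\langle P\rangle\rangle(a)=\lim_{T\to\pm\infty}\frac1{|T|}\int_0^T\Phi_{\Lambda t}P(\Phi_{-\Lambda t}a)\,dt$ and $\Phi_w=\mathrm{diag}(e^{\mathbf{i}w_j})$. *)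

theory Defs
  imports "HOL-Analysis.Analysis"
begin

definition Phi :: "real^'n \<Rightarrow> complex^'n \<Rightarrow> complex^'n" where
  "Phi w z = (\<chi> j. exp (\<i> * complex_of_real (w $ j)) * z $ j)"

definition Lip_X :: "(real \<Rightarrow> real) \<Rightarrow> (complex^'n \<Rightarrow> complex^'n) \<Rightarrow> bool" where
  "Lip_X X P \<longleftrightarrow> continuous_on UNIV P \<and>
     (\<forall>r\<ge>0. (\<forall>z\<in>cball 0 r. norm (P z) \<le> X r) \<and>
             (\<forall>x\<in>cball 0 r. \<forall>y\<in>cball 0 r. norm (P x - P y) \<le> X r * norm (x - y)))"

definition avg :: "real^'n \<Rightarrow> (complex^'n \<Rightarrow> complex^'n) \<Rightarrow> complex^'n \<Rightarrow> complex^'n" where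
  "avg \<Lambda> P a = Lim at_top (\<lambda>T. (1 / T) *\<^sub>R
      integral {0..T} (\<lambda>t. Phi (t *\<^sub>R \<Lambda>) (P (Phi (- (t *\<^sub>R \<Lambda>)) a))))"

end

theory Submission
  imports Defs
begin

definition mean_fwd :: "(real \<Rightarrow> 'a::real_normed_vector) \<Rightarrow> 'a \<Rightarrow> bool" where
  "mean_fwd g L \<longleftrightarrow> ((\<lambda>T. (1/T) *\<^sub>R integral {0..T} g) \<longlongrightarrow> L) at_top"

definition has_mean :: "(real \<Rightarrow> 'a::real_normed_vector) \<Rightarrow> 'a \<Rightarrow> bool" where
  "has_mean g L \<longleftrightarrow> mean_fwd g L \<and> mean_fwd (\<lambda>t. g (-t)) L"

lemma cont_int: "continuous_on UNIV g \<Longrightarrow> (g::real\<Rightarrow>'a::banach) integrable_on {a..b}"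
  by (rule integrable_continuous_interval) (auto intro: continuous_on_subset)

lemma mean_fwd_add:
  fixes g h :: "real \<Rightarrow> 'a::banach"
  assumes "continuous_on UNIV g" "continuous_on UNIV h" "mean_fwd g L" "mean_fwd h M"
  shows "mean_fwd (\<lambda>t. g t + h t) (L + M)"
proof -
  have "integral {0..T} (\<lambda>t. g t + h t) = integral {0..T} g + integral {0..T} h" for T
    by (rule integral_add) (use assms cont_int in auto)
  then show ?thesis using assms(3,4) unfolding mean_fwd_def
    by (simp add: scaleR_add_right tendsto_add)
qed

lemma mean_fwd_linear:
  fixes g :: "real \<Rightarrow> 'a::banach"
  assumes f: "bounded_linear f" and "continuous_on UNIV g" "mean_fwd g L"
  shows "mean_fwd (\<lambda>t. f (g t)) (f L)"
proof -
  have "integral {0..T} (\<lambda>t. f (g t)) = f (integral {0..T} g)" for T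
    using integral_linear[OF cont_int[OF assms(2)] f] by (simp add: o_def)
  moreover have "(1/T) *\<^sub>R f x = f ((1/T) *\<^sub>R x)" for T x
    using f by (simp add: linear_simps(5))
  ultimately show ?thesis using assms(3) bounded_linear.tendsto[OF f] unfolding mean_fwd_def
    by simp
qed

lemma mean_fwd_zero: "mean_fwd (\<lambda>t. 0::'a::banach) 0"
  unfolding mean_fwd_def by simp

lemma mean_fwd_sum:
  fixes g :: "'i \<Rightarrow> real \<Rightarrow> 'a::banach"
  assumes "finite I" "\<And>i. i \<in> I \<Longrightarrow> continuous_on UNIV (g i)" "\<And>i. i \<in> I \<Longrightarrow> mean_fwd (g i) (L i)"
  shows "mean_fwd (\<lambda>t. \<Sum>i\<in>I. g i t) (\<Sum>i\<in>I. L i)"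
  using assms
proof (induction I rule: finite_induct)
  case empty then show ?case by (simp add: mean_fwd_zero)
next
  case (insert x F)
  then show ?case
    by (simp, intro mean_fwd_add continuous_on_sum) auto
qed

lemma has_mean_add:
  fixes g h :: "real \<Rightarrow> 'a::banach"
  assumes "continuous_on UNIV g" "continuous_on UNIV h" "has_mean g L" "has_mean h M"
  shows "has_mean (\<lambda>t. g t + h t) (L + M)"
proof -
  have "continuous_on UNIV (\<lambda>t. g (-t))" "continuous_on UNIV (\<lambda>t. h (-t))"
    using assms(1,2) by (auto intro!: continuous_on_compose2[OF _ continuous_on_minus[OF continuous_on_id]])
  then show ?thesis using assms unfolding has_mean_def by (auto intro: mean_fwd_add)
qed

lemma has_mean_linear:
  fixes g :: "real \<Rightarrow> 'a::banach"
  assumes f: "bounded_linear f" and "continuous_on UNIV g" "has_mean g L"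
  shows "has_mean (\<lambda>t. f (g t)) (f L)"
proof -
  have "continuous_on UNIV (\<lambda>t. g (-t))"
    using assms(2) by (auto intro!: continuous_on_compose2[OF _ continuous_on_minus[OF continuous_on_id]])
  then show ?thesis using assms unfolding has_mean_def by (auto intro: mean_fwd_linear)
qed

lemma has_mean_sum:
  fixes g :: "'i \<Rightarrow> real \<Rightarrow> 'a::banach"
  assumes "finite I" "\<And>i. i \<in> I \<Longrightarrow> continuous_on UNIV (g i)" "\<And>i. i \<in> I \<Longrightarrow> has_mean (g i) (L i)"
  shows "has_mean (\<lambda>t. \<Sum>i\<in>I. g i t) (\<Sum>i\<in>I. L i)"
proof -
  have "continuous_on UNIV (\<lambda>t. g i (-t))" if "i \<in> I" for i
    using assms(2)[OF that] by (auto intro!: continuous_on_compose2[OF _ continuous_on_minus[OF continuous_on_id]])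
  then show ?thesis using assms unfolding has_mean_def by (auto intro!: mean_fwd_sum)
qed

lemma mean_fwd_exp:
  "mean_fwd (\<lambda>t. exp (t *\<^sub>R (\<i> * complex_of_real w))) (if w = 0 then 1 else 0)"
proof (cases "w = 0")
  case True
  have "\<forall>\<^sub>F T in at_top. (1/T) *\<^sub>R integral {0..T} (\<lambda>t. 1::complex) = 1"
    using eventually_gt_at_top[of "0::real"] by eventually_elim (simp add: integral_const_real)
  then show ?thesis using True unfolding mean_fwd_def by (simp add: tendsto_eventually)
next
  case False
  define c where "c = \<i> * complex_of_real w"
  have c0: "c \<noteq> 0" using False by (simp add: c_def)
  have der: "((\<lambda>t. exp (t *\<^sub>R c) / c) has_vector_derivative exp (t *\<^sub>R c)) (at t within S)" for t S
  proof -
    have "((\<lambda>t. exp (t *\<^sub>R c) / c) has_vector_derivative (exp (t *\<^sub>R c) * c) / c) (at t within S)"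
      by (rule bounded_linear.has_vector_derivative[OF bounded_linear_divide exp_scaleR_has_vector_derivative_right])
    then show ?thesis using c0 by simp
  qed
  have int: "integral {0..T} (\<lambda>t. exp (t *\<^sub>R c)) = exp (T *\<^sub>R c) / c - 1 / c" if "T \<ge> 0" for T
    using fundamental_theorem_of_calculus[OF that, of "\<lambda>t. exp (t *\<^sub>R c) / c" "\<lambda>t. exp (t *\<^sub>R c)"] der
    by (auto dest!: integral_unique)
  have nrm: "norm (exp (T *\<^sub>R c)) = 1" for T
    by (simp add: c_def scaleR_conv_of_real mult.left_commute[of "complex_of_real T"] flip: of_real_mult)
  have bnd: "norm ((1/T) *\<^sub>R integral {0..T} (\<lambda>t. exp (t *\<^sub>R c))) \<le> (2 / norm c) / T" if "T > 0" for T
  proof -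
    have "norm (exp (T *\<^sub>R c) / c - 1 / c) \<le> norm (exp (T *\<^sub>R c) / c) + norm (1 / c)"
      by (rule norm_triangle_ineq4)
    also have "\<dots> = 2 / norm c" by (simp only: norm_divide nrm norm_one)
    finally have n: "norm (integral {0..T} (\<lambda>t. exp (t *\<^sub>R c))) \<le> 2 / norm c"
      by (simp only: int[OF less_imp_le[OF that]])
    have "norm ((1/T) *\<^sub>R integral {0..T} (\<lambda>t. exp (t *\<^sub>R c))) = norm (integral {0..T} (\<lambda>t. exp (t *\<^sub>R c))) / T"
      using that by simp
    then show ?thesis using divide_right_mono[OF n less_imp_le[OF that]] that by (simp add: abs_of_pos)
  qed
  have lim0: "((\<lambda>T. (2 / norm c) / T) \<longlongrightarrow> 0) at_top"
    by (rule tendsto_divide_0[OF tendsto_const filterlim_at_top_imp_at_infinity[OF filterlim_ident]])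
  have ev: "\<forall>\<^sub>F T in at_top. norm ((1/T) *\<^sub>R integral {0..T} (\<lambda>t. exp (t *\<^sub>R c))) \<le> (2 / norm c) / T"
    using eventually_gt_at_top[of "0::real"] by eventually_elim (rule bnd)
  have "((\<lambda>T. (1/T) *\<^sub>R integral {0..T} (\<lambda>t. exp (t *\<^sub>R c))) \<longlongrightarrow> 0) at_top"
    by (rule Lim_null_comparison[OF ev lim0])
  then show ?thesis using False unfolding mean_fwd_def c_def by simp
qed


definition expsum :: "(complex \<times> real) list \<Rightarrow> real \<Rightarrow> complex" where
  "expsum cs t = (\<Sum>(c,w)\<leftarrow>cs. c * exp (t *\<^sub>R (\<i> * complex_of_real w)))"

definition esmean :: "(complex \<times> real) list \<Rightarrow> complex" where
  "esmean cs = (\<Sum>(c,w)\<leftarrow>cs. if w = 0 then c else 0)"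

lemma expsum_Nil[simp]: "expsum [] t = 0" by (simp add: expsum_def)
lemma expsum_Cons[simp]: "expsum ((c,w)#cs) t = c * exp (t *\<^sub>R (\<i> * complex_of_real w)) + expsum cs t"
  by (simp add: expsum_def)
lemma esmean_Nil[simp]: "esmean [] = 0" by (simp add: esmean_def)
lemma esmean_Cons[simp]: "esmean ((c,w)#cs) = (if w = 0 then c else 0) + esmean cs"
  by (simp add: esmean_def)

lemma expsum_append: "expsum (cs @ ds) t = expsum cs t + expsum ds t"
  by (simp add: expsum_def)

lemma cont_expsum: "continuous_on UNIV (expsum cs)"
proof (induction cs)
  case Nil then show ?case by (simp add: expsum_def)
next
  case (Cons p cs)
  obtain c w where p: "p = (c,w)" by fastforce
  have e: "expsum (p#cs) = (\<lambda>t. c * exp (t *\<^sub>R (\<i> * complex_of_real w)) + expsum cs t)"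
    by (auto simp: p)
  show ?case unfolding e by (intro continuous_intros Cons)
qed

lemma mean_fwd_expsum: "mean_fwd (expsum cs) (esmean cs)"
proof (induction cs)
  case Nil then show ?case using mean_fwd_zero[where 'a=complex] by (simp add: expsum_def[abs_def])
next
  case (Cons p cs)
  obtain c w where p: "p = (c,w)" by fastforce
  have e: "expsum (p#cs) = (\<lambda>t. c * exp (t *\<^sub>R (\<i> * complex_of_real w)) + expsum cs t)"
    by (auto simp: p)
  have m1: "mean_fwd (\<lambda>t. c * exp (t *\<^sub>R (\<i> * complex_of_real w))) (c * (if w = 0 then 1 else 0))"
    by (rule mean_fwd_linear[OF bounded_linear_mult_right _ mean_fwd_exp]) (intro continuous_intros)
  have "mean_fwd (expsum (p#cs)) (c * (if w = 0 then 1 else 0) + esmean cs)"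
    unfolding e by (rule mean_fwd_add[OF _ cont_expsum m1 Cons]) (intro continuous_intros)
  moreover have "esmean (p#cs) = c * (if w = 0 then 1 else 0) + esmean cs" by (simp add: p)
  ultimately show ?case by metis
qed

lemma expsum_neg: "expsum cs (-t) = expsum (map (\<lambda>(c,w). (c,-w)) cs) t"
  by (induction cs) auto

lemma esmean_neg: "esmean (map (\<lambda>(c,w). (c,-w)) cs) = esmean cs"
  by (induction cs) auto

lemma has_mean_expsum: "has_mean (expsum cs) (esmean cs)"
  unfolding has_mean_def using mean_fwd_expsum[of cs] mean_fwd_expsum[of "map (\<lambda>(c,w). (c,-w)) cs"]
  by (simp add: expsum_neg esmean_neg)

definition is_es :: "(real \<Rightarrow> complex) \<Rightarrow> bool" where
  "is_es g \<longleftrightarrow> (\<exists>cs. g = expsum cs)"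

lemma is_es_const: "is_es (\<lambda>t. c)"
  unfolding is_es_def by (rule exI[of _ "[(c,0)]"]) auto

lemma is_es_exp: "is_es (\<lambda>t. exp (t *\<^sub>R (\<i> * complex_of_real w)))"
  unfolding is_es_def by (rule exI[of _ "[(1,w)]"]) auto

lemma is_es_add: "is_es f \<Longrightarrow> is_es g \<Longrightarrow> is_es (\<lambda>t. f t + g t)"
  unfolding is_es_def
proof (elim exE)
  fix cs ds assume "f = expsum cs" "g = expsum ds"
  then show "\<exists>es. (\<lambda>t. f t + g t) = expsum es"
    by (intro exI[of _ "cs @ ds"]) (simp add: fun_eq_iff expsum_append)
qed

lemma expsum_mult1: "(c * exp (t *\<^sub>R (\<i> * complex_of_real w))) * expsum ds t
   = expsum (map (\<lambda>(d,v). (c*d, w+v)) ds) t"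
proof (induction ds)
  case Nil then show ?case by simp
next
  case (Cons p ds)
  obtain d v where p: "p = (d,v)" by fastforce
  have "exp (t *\<^sub>R (\<i> * complex_of_real w)) * exp (t *\<^sub>R (\<i> * complex_of_real v))
     = exp (t *\<^sub>R (\<i> * complex_of_real (w+v)))"
    by (simp add: exp_add[symmetric] algebra_simps)
  then show ?case using Cons
    by (simp add: p algebra_simps)
qed

lemma expsum_mult: "expsum cs t * expsum ds t = expsum (concat (map (\<lambda>(c,w). map (\<lambda>(d,v). (c*d, w+v)) ds) cs)) t"
proof (induction cs)
  case Nil then show ?case by simp
next
  case (Cons p cs)
  obtain c w where p: "p = (c,w)" by fastforce
  show ?case using Cons expsum_mult1[of c t w ds]
    by (simp add: p expsum_append distrib_right)
qed

lemma is_es_mult: "is_es f \<Longrightarrow> is_es g \<Longrightarrow> is_es (\<lambda>t. f t * g t)"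
  unfolding is_es_def using expsum_mult by blast

lemma is_es_sum: "finite I \<Longrightarrow> (\<And>i. i \<in> I \<Longrightarrow> is_es (f i)) \<Longrightarrow> is_es (\<lambda>t. \<Sum>i\<in>I. f i t)"
  by (induction I rule: finite_induct) (auto intro: is_es_add is_es_const[of 0, simplified])

lemma is_es_has_mean: "is_es g \<Longrightarrow> \<exists>L. has_mean g L"
  unfolding is_es_def using has_mean_expsum by blast

lemma is_es_cont: "is_es g \<Longrightarrow> continuous_on UNIV g"
  unfolding is_es_def using cont_expsum by blast


lemma avg_norm_bound:
  fixes f :: "real \<Rightarrow> 'a::banach"
  assumes "continuous_on UNIV f" "T > 0" "\<And>t. t \<in> {0..T} \<Longrightarrow> norm (f t) \<le> B"
  shows "norm ((1/T) *\<^sub>R integral {0..T} f) \<le> B"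
proof -
  have "norm (integral {0..T} f) \<le> integral {0..T} (\<lambda>t. B)"
    by (rule integral_norm_bound_integral) (use assms cont_int in auto)
  also have "\<dots> = T * B" using assms(2) by (simp add: integral_const_real)
  finally have "norm (integral {0..T} f) \<le> T * B" .
  then show ?thesis using assms(2) by (simp add: divide_simps mult.commute)
qed

lemma avg_diff:
  fixes g h :: "real \<Rightarrow> 'a::banach"
  assumes "continuous_on UNIV g" "continuous_on UNIV h"
  shows "(1/T) *\<^sub>R integral {0..T} g - (1/T) *\<^sub>R integral {0..T} h = (1/T) *\<^sub>R integral {0..T} (\<lambda>t. g t - h t)"
proof -
  have "integral {0..T} (\<lambda>t. g t - h t) = integral {0..T} g - integral {0..T} h"
    by (rule integral_diff) (use assms cont_int in auto)
  then show ?thesis by (simp add: scaleR_diff_right)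
qed

lemma avg_close:
  fixes g h :: "real \<Rightarrow> 'a::banach"
  assumes "continuous_on UNIV g" "continuous_on UNIV h" "T > 0" "\<And>t. norm (g t - h t) \<le> B"
  shows "norm ((1/T) *\<^sub>R integral {0..T} g - (1/T) *\<^sub>R integral {0..T} h) \<le> B"
  unfolding avg_diff[OF assms(1,2)]
  by (rule avg_norm_bound) (use assms in \<open>auto intro!: continuous_intros\<close>)

lemma mean_fwd_approx1:
  fixes g :: "real \<Rightarrow> 'a::banach" and h :: "nat \<Rightarrow> real \<Rightarrow> 'a"
  assumes cg: "continuous_on UNIV g" and ch: "\<And>k. continuous_on UNIV (h k)"
    and m: "\<And>k. mean_fwd (h k) (L k)" and ap: "\<And>k t. norm (g t - h k t) \<le> 1 / real (Suc k)"
  shows "norm (L k - L m) \<le> 1 / real (Suc k) + 1 / real (Suc m)"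
proof -
  let ?A = "\<lambda>f T. (1/T) *\<^sub>R integral {0..T} f"
  have lim: "((\<lambda>T. norm (?A (h k) T - ?A (h m) T)) \<longlongrightarrow> norm (L k - L m)) at_top"
    using m[of k] m[of m] unfolding mean_fwd_def by (intro tendsto_intros)
  have ev: "\<forall>\<^sub>F T in at_top. norm (?A (h k) T - ?A (h m) T) \<le> 1 / real (Suc k) + 1 / real (Suc m)"
    using eventually_gt_at_top[of "0::real"]
  proof eventually_elim
    case (elim T)
    have 1: "norm (?A g T - ?A (h k) T) \<le> 1 / real (Suc k)"
      by (rule avg_close[OF cg ch elim ap])
    have 2: "norm (?A g T - ?A (h m) T) \<le> 1 / real (Suc m)"
      by (rule avg_close[OF cg ch elim ap])
    have "norm (?A (h k) T - ?A (h m) T) \<le> norm (?A g T - ?A (h k) T) + norm (?A g T - ?A (h m) T)"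
      using norm_triangle_ineq4[of "?A g T - ?A (h m) T" "?A g T - ?A (h k) T"] by (simp add: add.commute)
    then show ?case using 1 2 by linarith
  qed
  show ?thesis by (rule tendsto_le[OF trivial_limit_at_top_linorder tendsto_const lim ev])
qed

lemma mean_fwd_approx2:
  fixes g :: "real \<Rightarrow> 'a::banach" and h :: "nat \<Rightarrow> real \<Rightarrow> 'a"
  assumes cg: "continuous_on UNIV g" and ch: "\<And>k. continuous_on UNIV (h k)"
    and m: "\<And>k. mean_fwd (h k) (L k)" and ap: "\<And>k t. norm (g t - h k t) \<le> 1 / real (Suc k)"
    and L: "L \<longlonglongrightarrow> l"
  shows "mean_fwd g l"
  unfolding mean_fwd_def
proof (rule tendstoI)
  fix e :: real assume e: "e > 0"
  let ?A = "\<lambda>f T. (1/T) *\<^sub>R integral {0..T} f"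
  obtain N where N: "inverse (real (Suc N)) < e/3"
    using reals_Archimedean[of "e/3"] e by auto
  obtain M where M: "\<And>k. k \<ge> M \<Longrightarrow> dist (L k) l < e/3"
    using L e unfolding LIMSEQ_def by (metis divide_pos_pos zero_less_numeral)
  define k where "k = max N M"
  have k1: "1 / real (Suc k) < e/3"
  proof -
    have "1 / real (Suc k) \<le> 1 / real (Suc N)" unfolding k_def
      by (simp add: frac_le)
    then show ?thesis using N by (simp add: inverse_eq_divide)
  qed
  have k2: "dist (L k) l < e/3" using M[of k] by (simp add: k_def)
  have "\<forall>\<^sub>F T in at_top. dist (?A (h k) T) (L k) < e/3"
    using m[of k] unfolding mean_fwd_def using e by (intro tendstoD) auto
  then show "\<forall>\<^sub>F T in at_top. dist (?A g T) l < e"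
    using eventually_gt_at_top[of "0::real"]
  proof eventually_elim
    case (elim T)
    have 1: "dist (?A g T) (?A (h k) T) \<le> 1 / real (Suc k)"
      unfolding dist_norm by (rule avg_close[OF cg ch elim(2) ap])
    have "dist (?A g T) l \<le> dist (?A g T) (?A (h k) T) + dist (?A (h k) T) (L k) + dist (L k) l"
      using dist_triangle[of "?A g T" l "?A (h k) T"] dist_triangle[of "?A (h k) T" l "L k"] by linarith
    then show ?case using 1 elim(1) k1 k2 by linarith
  qed
qed

lemma has_mean_approx:
  fixes g :: "real \<Rightarrow> 'a::banach" and h :: "nat \<Rightarrow> real \<Rightarrow> 'a"
  assumes cg: "continuous_on UNIV g" and ch: "\<And>k. continuous_on UNIV (h k)"
    and m: "\<And>k. has_mean (h k) (L k)" and ap: "\<And>k t. norm (g t - h k t) \<le> 1 / real (Suc k)"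
  shows "\<exists>l. has_mean g l"
proof -
  have mf: "mean_fwd (h k) (L k)" for k using m unfolding has_mean_def by auto
  have "Cauchy L"
  proof (rule metric_CauchyI)
    fix e :: real assume e: "e > 0"
    obtain N where N: "inverse (real (Suc N)) < e/2"
      using reals_Archimedean[of "e/2"] e by auto
    have "dist (L a) (L b) < e" if "a \<ge> N" "b \<ge> N" for a b
    proof -
      have "1 / real (Suc a) \<le> 1 / real (Suc N)" "1 / real (Suc b) \<le> 1 / real (Suc N)"
        using that by (auto simp add: frac_le)
      then show ?thesis using mean_fwd_approx1[OF cg ch mf ap, of a b] N
        by (simp add: dist_norm inverse_eq_divide)
    qed
    then show "\<exists>M. \<forall>m\<ge>M. \<forall>n\<ge>M. dist (L m) (L n) < e" by blast
  qed
  then obtain l where l: "L \<longlonglongrightarrow> l" using Cauchy_convergent convergent_def by blast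
  have cg': "continuous_on UNIV (\<lambda>t. g (-t))"
    using cg by (auto intro!: continuous_on_compose2[OF _ continuous_on_minus[OF continuous_on_id]])
  have ch': "continuous_on UNIV (\<lambda>t. h k (-t))" for k
    using ch by (auto intro!: continuous_on_compose2[OF _ continuous_on_minus[OF continuous_on_id]])
  have mb: "mean_fwd (\<lambda>t. h k (-t)) (L k)" for k using m unfolding has_mean_def by auto
  have "mean_fwd g l" by (rule mean_fwd_approx2[OF cg ch mf ap l])
  moreover have "mean_fwd (\<lambda>t. g (-t)) l" by (rule mean_fwd_approx2[OF cg' ch' mb ap l])
  ultimately show ?thesis unfolding has_mean_def by blast
qed


definition uu :: "real^'n \<Rightarrow> real \<Rightarrow> complex^'n" where
  "uu \<Lambda> t = (\<chi> j. exp (t *\<^sub>R (\<i> * complex_of_real (\<Lambda>$j))))"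

lemma uu_nth_es: "is_es (\<lambda>t. uu \<Lambda> t $ j)" by (simp add: uu_def is_es_exp)

lemma cnj_exp_i: "cnj (exp (t *\<^sub>R (\<i> * complex_of_real w))) = exp (t *\<^sub>R (\<i> * complex_of_real (-w)))"
  by (simp add: exp_cnj scaleR_conv_of_real)

lemma uu_cnj_es: "is_es (\<lambda>t. cnj (uu \<Lambda> t $ j))" unfolding uu_def vec_lambda_beta cnj_exp_i by (rule is_es_exp)

lemma is_es_diff: "is_es f \<Longrightarrow> is_es g \<Longrightarrow> is_es (\<lambda>t. f t - g t)"
proof -
  assume "is_es f" "is_es g"
  then have "is_es (\<lambda>t. f t + (-1) * g t)" by (intro is_es_add is_es_mult is_es_const)
  then show ?thesis by simp
qed

lemma vec_decomp: "(x::complex^'n) = (\<Sum>j\<in>UNIV. Re (x$j) *\<^sub>R axis j 1 + Im (x$j) *\<^sub>R axis j \<i>)"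
  by (simp add: vec_eq_iff sum_component axis_def complex_eq_iff if_distrib cong: if_cong)

lemma rre: "complex_of_real (Re z) = (z + cnj z) * (1/2)" by (simp add: complex_add_cnj)
lemma rim: "complex_of_real (Im z) = (z - cnj z) * (1/(2*\<i>))" by (simp add: complex_diff_cnj)

lemma lin_es:
  fixes f :: "complex^'n \<Rightarrow> real" assumes "bounded_linear f"
  shows "is_es (\<lambda>t. complex_of_real (f (uu \<Lambda> t)))"
proof -
  have lin: "linear f" using assms bounded_linear.linear by blast
  have fx: "f x = (\<Sum>j\<in>UNIV. Re (x$j) * f (axis j 1) + Im (x$j) * f (axis j \<i>))" for x
    by (subst vec_decomp[of x]) (simp add: linear_sum[OF lin] linear_add[OF lin] linear_scale[OF lin])
  have eq: "complex_of_real (f (uu \<Lambda> t)) = (\<Sum>j\<in>UNIV. (uu \<Lambda> t $ j + cnj (uu \<Lambda> t $ j)) * (1/2) * complex_of_real (f (axis j 1))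
       + (uu \<Lambda> t $ j - cnj (uu \<Lambda> t $ j)) * (1/(2*\<i>)) * complex_of_real (f (axis j \<i>)))" for t
    by (subst fx) (simp only: of_real_sum of_real_add of_real_mult rre rim)
  show ?thesis unfolding eq
    by (intro is_es_sum finite is_es_add is_es_mult is_es_const is_es_diff uu_nth_es uu_cnj_es)
qed

lemma rpf_es: "real_polynomial_function f \<Longrightarrow> is_es (\<lambda>t. complex_of_real (f (uu \<Lambda> t)))"
proof (induction rule: real_polynomial_function.induct)
  case (linear f) then show ?case by (rule lin_es)
next
  case (const c) then show ?case by (rule is_es_const)
next
  case (add f g) then show ?case by (simp only: of_real_add) (rule is_es_add)
next
  case (mult f g) then show ?case by (simp only: of_real_mult) (rule is_es_mult)
qed

lemma poly_mean:
  fixes g :: "complex^'n \<Rightarrow> complex^'n"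
  assumes "polynomial_function g"
  shows "\<exists>L. has_mean (\<lambda>t. g (uu \<Lambda> t)) L"
proof -
  have "real_polynomial_function (\<lambda>x. g x \<bullet> b)" for b
    using assms bounded_linear_inner_left[of b] unfolding polynomial_function_def o_def by blast
  then have es: "is_es (\<lambda>t. complex_of_real (g (uu \<Lambda> t) \<bullet> b))" for b by (rule rpf_es)
  then have "\<forall>b. \<exists>L. has_mean (\<lambda>t. complex_of_real (g (uu \<Lambda> t) \<bullet> b)) L"
    using is_es_has_mean by blast
  then obtain Lb where Lb: "\<And>b. has_mean (\<lambda>t. complex_of_real (g (uu \<Lambda> t) \<bullet> b)) (Lb b)"
    by metis
  have bl: "bounded_linear (\<lambda>z. Re z *\<^sub>R b)" for b :: "complex^'n"
    by (rule bounded_linear_compose[OF bounded_linear_scaleR_left bounded_linear_Re])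
  have cb: "continuous_on UNIV (\<lambda>t. complex_of_real (g (uu \<Lambda> t) \<bullet> b))" for b
    by (rule is_es_cont[OF es])
  have hm: "has_mean (\<lambda>t. Re (complex_of_real (g (uu \<Lambda> t) \<bullet> b)) *\<^sub>R b) (Re (Lb b) *\<^sub>R b)" for b
    by (rule has_mean_linear[OF bl cb Lb])
  have cb2: "continuous_on UNIV (\<lambda>t. Re (complex_of_real (g (uu \<Lambda> t) \<bullet> b)) *\<^sub>R b)" for b
    by (intro continuous_intros cb)
  have "has_mean (\<lambda>t. \<Sum>b\<in>Basis. Re (complex_of_real (g (uu \<Lambda> t) \<bullet> b)) *\<^sub>R b) (\<Sum>b\<in>Basis. Re (Lb b) *\<^sub>R b)"
    by (rule has_mean_sum[OF finite_Basis cb2 hm])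
  moreover have "(\<lambda>t. \<Sum>b\<in>Basis. Re (complex_of_real (g (uu \<Lambda> t) \<bullet> b)) *\<^sub>R b) = (\<lambda>t. g (uu \<Lambda> t))"
    by (simp add: euclidean_representation)
  ultimately show ?thesis by auto
qed

definition Fv :: "real^'n \<Rightarrow> (complex^'n \<Rightarrow> complex^'n) \<Rightarrow> real \<Rightarrow> complex^'n \<Rightarrow> complex^'n" where
  "Fv \<Lambda> P t z = Phi (t *\<^sub>R \<Lambda>) (P (Phi (- (t *\<^sub>R \<Lambda>)) z))"

definition Hz :: "(complex^'n \<Rightarrow> complex^'n) \<Rightarrow> complex^'n \<Rightarrow> complex^'n \<Rightarrow> complex^'n" where
  "Hz P z x = (\<chi> j. x$j * P (\<chi> k. cnj (x$k) * z$k) $ j)"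

lemma e1: "exp (\<i> * complex_of_real ((t *\<^sub>R \<Lambda>) $ j)) = exp (t *\<^sub>R (\<i> * complex_of_real (\<Lambda>$j)))"
  by (simp only: vector_scaleR_component) (simp add: scaleR_conv_of_real mult_ac)

lemma e2: "exp (\<i> * complex_of_real ((- (t *\<^sub>R \<Lambda>)) $ j)) = cnj (exp (t *\<^sub>R (\<i> * complex_of_real (\<Lambda>$j))))"
  by (simp only: vector_uminus_component vector_scaleR_component exp_cnj) (simp add: scaleR_conv_of_real mult_ac)

lemma Fv_Hz: "Fv \<Lambda> P t z = Hz P z (uu \<Lambda> t)"
  unfolding Fv_def Hz_def Phi_def uu_def by (simp only: e1 e2 vec_lambda_beta)

lemma cont_nth: "continuous_on S f \<Longrightarrow> continuous_on S (\<lambda>x. f x $ j)"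
  by (rule continuous_on_compose2[OF continuous_on_component continuous_on_id]) auto

lemma cont_Hz: assumes cP: "continuous_on UNIV P" shows "continuous_on UNIV (Hz P z)"
proof -
  have cw: "continuous_on UNIV (\<lambda>x. \<chi> k. cnj (x$k) * z$k)"
    by (intro continuous_on_vec_lambda continuous_on_mult continuous_on_cnj cont_nth continuous_on_id continuous_on_const)
  have cPw: "continuous_on UNIV (\<lambda>x. P (\<chi> k. cnj (x$k) * z$k))"
    by (rule continuous_on_compose2[OF cP cw]) auto
  show ?thesis unfolding Hz_def
    by (intro continuous_on_vec_lambda continuous_on_mult cont_nth[OF continuous_on_id] cont_nth[OF cPw])
qed

lemma cont_uu: "continuous_on S (uu \<Lambda>)"
  unfolding uu_def by (intro continuous_on_vec_lambda continuous_intros)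

lemma norm_uu: fixes \<Lambda> :: "real^'n" shows "norm (uu \<Lambda> t) \<le> real CARD('n)"
proof -
  have "norm (uu \<Lambda> t) = L2_set (\<lambda>i. norm (uu \<Lambda> t $ i)) UNIV" by (simp add: norm_vec_def)
  also have "\<dots> \<le> (\<Sum>i\<in>UNIV. norm (uu \<Lambda> t $ i))" by (rule L2_set_le_sum) auto
  also have "\<dots> = real CARD('n)"
    by (simp add: uu_def scaleR_conv_of_real mult.left_commute[of "complex_of_real t"] flip: of_real_mult)
  finally show ?thesis .
qed

lemma Fv_mean:
  fixes P :: "complex^'n \<Rightarrow> complex^'n"
  assumes cP: "continuous_on UNIV P"
  shows "has_mean (\<lambda>t. Fv \<Lambda> P t z) (avg \<Lambda> P z)"
proof -
  define S where "S = cball (0::complex^'n) (real CARD('n))"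
  have uS: "uu \<Lambda> t \<in> S" for t using norm_uu by (simp add: S_def)
  have sw: "\<exists>g. polynomial_function g \<and> (\<forall>x\<in>S. norm (Hz P z x - g x) < 1 / real (Suc k))" for k
    by (rule Stone_Weierstrass_polynomial_function) (auto simp: S_def intro: continuous_on_subset[OF cont_Hz[OF cP]])
  then have "\<forall>k. \<exists>g. polynomial_function g \<and> (\<forall>x\<in>S. norm (Hz P z x - g x) < 1 / real (Suc k))"
    by blast
  then obtain gg where gg: "\<And>k. polynomial_function (gg k)"
      "\<And>k x. x \<in> S \<Longrightarrow> norm (Hz P z x - gg k x) < 1 / real (Suc k)"
    by metis
  have "\<forall>k. \<exists>L. has_mean (\<lambda>t. gg k (uu \<Lambda> t)) L" using poly_mean gg(1) by blast
  then obtain L where L: "\<And>k. has_mean (\<lambda>t. gg k (uu \<Lambda> t)) (L k)" by metis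
  have cF: "continuous_on UNIV (\<lambda>t. Fv \<Lambda> P t z)"
    unfolding Fv_Hz by (rule continuous_on_compose2[OF cont_Hz[OF cP] cont_uu]) auto
  have ch: "continuous_on UNIV (\<lambda>t. gg k (uu \<Lambda> t))" for k
    by (rule continuous_on_compose2[OF continuous_on_polymonial_function[OF gg(1)] cont_uu]) auto
  have ap: "norm (Fv \<Lambda> P t z - gg k (uu \<Lambda> t)) \<le> 1 / real (Suc k)" for k t
    unfolding Fv_Hz by (rule less_imp_le[OF gg(2)[OF uS]])
  obtain l where l: "has_mean (\<lambda>t. Fv \<Lambda> P t z) l"
    using has_mean_approx[OF cF ch L ap] by blast
  have "((\<lambda>T. (1/T) *\<^sub>R integral {0..T} (\<lambda>t. Fv \<Lambda> P t z)) \<longlongrightarrow> l) at_top"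
    using l unfolding has_mean_def mean_fwd_def by auto
  then have "avg \<Lambda> P z = l" unfolding avg_def Fv_def[abs_def]
    by (rule tendsto_Lim[OF trivial_limit_at_top_linorder])
  then show ?thesis using l by simp
qed


lemma norm_Phi[simp]: "norm (Phi w z) = norm z"
  by (simp add: Phi_def norm_vec_def norm_mult norm_exp_i_times)

lemma norm_Phi_nth: "norm (Phi w z $ j) = norm (z $ j)"
  by (simp add: Phi_def norm_mult norm_exp_i_times)

lemma Phi_diff: "Phi w x - Phi w y = Phi w (x - y)"
  by (simp add: Phi_def vec_eq_iff algebra_simps)

lemma Phi_inv: "Phi (- w) (Phi w z) = z"
proof -
  have "exp (\<i> * complex_of_real (- w $ j)) * (exp (\<i> * complex_of_real (w $ j)) * z $ j) = z $ j" for j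
    by (simp add: mult.assoc[symmetric] exp_add[symmetric])
  then show ?thesis by (simp add: Phi_def vec_eq_iff)
qed

lemma Phi_zero: "Phi 0 z = z"
  by (simp add: Phi_def vec_eq_iff)

lemma LipD:
  assumes "Lip_X X P" "r \<ge> 0"
  shows "\<And>z. norm z \<le> r \<Longrightarrow> norm (P z) \<le> X r"
    and "\<And>x y. norm x \<le> r \<Longrightarrow> norm y \<le> r \<Longrightarrow> norm (P x - P y) \<le> X r * norm (x - y)"
    and "continuous_on UNIV P"
  using assms unfolding Lip_X_def by (auto simp: mem_cball_0)

lemma Fv_bound:
  assumes "Lip_X X P" "r \<ge> 0" "norm z \<le> r"
  shows "norm (Fv \<Lambda> P t z) \<le> X r"
  unfolding Fv_def norm_Phi by (rule LipD(1)[OF assms(1,2)]) (simp add: assms(3))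

lemma Fv_lip:
  assumes "Lip_X X P" "r \<ge> 0" "norm x \<le> r" "norm y \<le> r"
  shows "norm (Fv \<Lambda> P t x - Fv \<Lambda> P t y) \<le> X r * norm (x - y)"
proof -
  have "norm (Fv \<Lambda> P t x - Fv \<Lambda> P t y) = norm (P (Phi (- (t *\<^sub>R \<Lambda>)) x) - P (Phi (- (t *\<^sub>R \<Lambda>)) y))"
    unfolding Fv_def Phi_diff norm_Phi ..
  also have "\<dots> \<le> X r * norm (Phi (- (t *\<^sub>R \<Lambda>)) x - Phi (- (t *\<^sub>R \<Lambda>)) y)"
    by (rule LipD(2)[OF assms(1,2)]) (simp_all add: assms)
  also have "\<dots> = X r * norm (x - y)" unfolding Phi_diff norm_Phi ..
  finally show ?thesis .
qed

lemma cont_Phi: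
  assumes "continuous_on S w" "continuous_on S z"
  shows "continuous_on S (\<lambda>s. Phi (w s) (z s))"
  unfolding Phi_def
  by (intro continuous_on_vec_lambda continuous_on_mult continuous_on_exp continuous_on_of_real
        cont_nth assms continuous_on_const)

lemma cont_Fv:
  assumes cP: "continuous_on UNIV P" and "continuous_on S f" "continuous_on S g"
  shows "continuous_on S (\<lambda>s. Fv \<Lambda> P (f s) (g s))"
proof -
  have c1: "continuous_on S (\<lambda>s. f s *\<^sub>R \<Lambda>)" by (intro continuous_intros assms)
  have c2: "continuous_on S (\<lambda>s. Phi (- (f s *\<^sub>R \<Lambda>)) (g s))"
    by (intro cont_Phi continuous_on_minus c1 assms)
  have c3: "continuous_on S (\<lambda>s. P (Phi (- (f s *\<^sub>R \<Lambda>)) (g s)))"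
    by (rule continuous_on_compose2[OF cP c2]) auto
  show ?thesis unfolding Fv_def by (rule cont_Phi[OF c1 c3])
qed

lemma bl_axis: "bounded_linear (axis i :: 'a::real_normed_vector \<Rightarrow> 'a^'n)"
proof (rule bounded_linear_intro[where K=1])
  show "axis i (x + y) = axis i x + axis i y" for x y :: 'a by (auto simp: vec_eq_iff axis_def)
  show "axis i (r *\<^sub>R x) = r *\<^sub>R axis i x" for r and x :: 'a by (simp add: vec_eq_iff axis_def)
  show "norm (axis i x) \<le> norm x * 1" for x :: 'a
  proof -
    have "norm (axis i x) = L2_set (\<lambda>j. norm (axis i x $ j)) UNIV" by (simp add: norm_vec_def)
    also have "\<dots> \<le> (\<Sum>j\<in>UNIV. norm (axis i x $ j))" by (rule L2_set_le_sum) auto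
    also have "\<dots> = norm x" by (simp add: axis_def if_distrib cong: if_cong)
    finally show ?thesis by simp
  qed
qed

lemma vec_sum_axis: "(f::'a::real_normed_vector^'n) = (\<Sum>i\<in>UNIV. axis i (f $ i))"
  by (simp add: vec_eq_iff sum_component axis_def if_distrib cong: if_cong)

lemma vec_vd:
  fixes f :: "real \<Rightarrow> 'a::real_normed_vector^'n"
  assumes "\<And>i. ((\<lambda>x. f x $ i) has_vector_derivative f' $ i) F"
  shows "(f has_vector_derivative f') F"
proof -
  have "((\<lambda>x. \<Sum>i\<in>UNIV. axis i (f x $ i)) has_vector_derivative (\<Sum>i\<in>UNIV. axis i (f' $ i))) F"
    by (intro has_vector_derivative_sum bounded_linear.has_vector_derivative[OF bl_axis] assms)
  then show ?thesis by (simp flip: vec_sum_axis)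
qed

lemma vec_vd_nth:
  "(f has_vector_derivative f') F \<Longrightarrow> ((\<lambda>x. f x $ i) has_vector_derivative f' $ i) F"
  by (rule bounded_linear.has_vector_derivative[OF bounded_linear_vec_nth])

lemma cont_Fv_t: "continuous_on UNIV P \<Longrightarrow> continuous_on S (\<lambda>t. Fv \<Lambda> P t z)"
  by (rule cont_Fv) (auto intro: continuous_intros)

lemma G_bound:
  assumes L: "Lip_X X P" "r \<ge> 0" "norm z \<le> r" and m: "mean_fwd (\<lambda>t. Fv \<Lambda> P t z) Gz"
  shows "norm Gz \<le> X r"
proof (rule Lim_norm_ubound[OF trivial_limit_at_top_linorder m[unfolded mean_fwd_def]])
  show "\<forall>\<^sub>F T in at_top. norm ((1/T) *\<^sub>R integral {0..T} (\<lambda>t. Fv \<Lambda> P t z)) \<le> X r"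
    using eventually_gt_at_top[of "0::real"]
    by eventually_elim (rule avg_norm_bound[OF cont_Fv_t[OF LipD(3)[OF L(1,2)]] _ Fv_bound[OF L]])
qed

lemma G_lip:
  assumes L: "Lip_X X P" "r \<ge> 0" "norm x \<le> r" "norm y \<le> r"
    and mx: "mean_fwd (\<lambda>t. Fv \<Lambda> P t x) Gx" and my: "mean_fwd (\<lambda>t. Fv \<Lambda> P t y) Gy"
  shows "norm (Gx - Gy) \<le> X r * norm (x - y)"
proof (rule Lim_norm_ubound[OF trivial_limit_at_top_linorder tendsto_diff[OF mx[unfolded mean_fwd_def] my[unfolded mean_fwd_def]]])
  have cP: "continuous_on UNIV P" by (rule LipD(3)[OF L(1,2)])
  show "\<forall>\<^sub>F T in at_top. norm ((1/T) *\<^sub>R integral {0..T} (\<lambda>t. Fv \<Lambda> P t x) - (1/T) *\<^sub>R integral {0..T} (\<lambda>t. Fv \<Lambda> P t y)) \<le> X r * norm (x - y)"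
    using eventually_gt_at_top[of "0::real"]
    by eventually_elim (rule avg_close[OF cont_Fv_t[OF cP] cont_Fv_t[OF cP] _ Fv_lip[OF L]])
qed

lemma mvt_bound:
  fixes y :: "real \<Rightarrow> 'a::real_normed_vector"
  assumes "a \<le> b" "\<And>x. x\<in>{a..b} \<Longrightarrow> (y has_vector_derivative y' x) (at x within {a..b})"
    "\<And>x. x\<in>{a..b} \<Longrightarrow> norm (y' x) \<le> B"
  shows "norm (y b - y a) \<le> B * (b - a)"
proof -
  have on: "onorm (\<lambda>h. h *\<^sub>R y' x) \<le> B" if "x \<in> {a..b}" for x
  proof (rule onorm_le)
    fix h :: real
    have "norm (h *\<^sub>R y' x) = norm (y' x) * norm h" by simp
    also have "\<dots> \<le> B * norm h" by (rule mult_right_mono[OF assms(3)[OF that]]) simp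
    finally show "norm (h *\<^sub>R y' x) \<le> B * norm h" .
  qed
  have "norm (y b - y a) \<le> B * norm (b - a)"
    by (rule differentiable_bound[of "{a..b}" y "\<lambda>x h. h *\<^sub>R y' x" B b a])
       (use assms on in \<open>auto simp: has_vector_derivative_def\<close>)
  then show ?thesis using assms(1) by simp
qed

lemma cont_induct:
  fixes Q :: "real \<Rightarrow> bool"
  assumes "0 \<le> \<theta>" "Q 0"
    and cl: "\<And>t. 0 < t \<Longrightarrow> t \<le> \<theta> \<Longrightarrow> (\<forall>s\<in>{0..<t}. Q s) \<Longrightarrow> Q t"
    and st: "\<And>t. 0 \<le> t \<Longrightarrow> t < \<theta> \<Longrightarrow> (\<forall>s\<in>{0..t}. Q s) \<Longrightarrow> \<exists>d>0. \<forall>s\<in>{t..t+d}. Q s"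
  shows "\<forall>t\<in>{0..\<theta>}. Q t"
proof (rule ccontr)
  assume nt: "\<not> (\<forall>t\<in>{0..\<theta>}. Q t)"
  define B where "B = {t\<in>{0..\<theta>}. \<not> Q t}"
  have ne: "B \<noteq> {}" using nt by (auto simp: B_def)
  have bdd: "bdd_below B" by (rule bdd_belowI[of _ 0]) (auto simp: B_def)
  define T where "T = Inf B"
  have T0: "0 \<le> T" unfolding T_def by (rule cInf_greatest[OF ne]) (auto simp: B_def)
  obtain b where b: "b \<in> B" using ne by auto
  have Tth: "T \<le> \<theta>" using cInf_lower[OF b bdd] b by (auto simp: B_def T_def)
  have below: "\<forall>s\<in>{0..<T}. Q s"
  proof
    fix s assume s: "s \<in> {0..<T}"
    show "Q s"
    proof (rule ccontr)
      assume "\<not> Q s"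
      then have "s \<in> B" using s Tth by (auto simp: B_def)
      then have "T \<le> s" unfolding T_def by (rule cInf_lower[OF _ bdd])
      then show False using s by auto
    qed
  qed
  have QT: "Q T"
  proof (cases "T = 0")
    case True then show ?thesis using assms(2) by simp
  next
    case False then show ?thesis using cl[of T] T0 Tth below by auto
  qed
  have all: "\<forall>s\<in>{0..T}. Q s" using below QT by (auto simp: less_eq_real_def)
  show False
  proof (cases "T < \<theta>")
    case False
    then have "T = \<theta>" using Tth by auto
    then show False using all b by (auto simp: B_def)
  next
    case True
    obtain d where d: "d > 0" "\<forall>s\<in>{T..T+d}. Q s" using st[OF T0 True all] by blast
    have "T + d \<le> Inf B"
    proof (rule cInf_greatest[OF ne])
      fix x assume x: "x \<in> B"
      have "T \<le> x" using cInf_lower[OF x bdd] by (simp add: T_def)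
      moreover have "\<not> Q x" using x by (simp add: B_def)
      ultimately show "T + d \<le> x" using d(2) by force
    qed
    then show False using d(1) by (simp add: T_def)
  qed
qed

lemma stay_ball:
  fixes y :: "real \<Rightarrow> 'a::real_normed_vector"
  assumes th: "\<theta> \<ge> 0" and K: "K > 0" "K * \<theta> \<le> R" and y0: "y 0 = v0" "norm v0 = R"
    and der: "\<And>\<tau>. \<tau>\<in>{0..\<theta>} \<Longrightarrow> (y has_vector_derivative y' \<tau>) (at \<tau> within {0..\<theta>})"
    and bnd: "\<And>\<tau>. \<tau>\<in>{0..\<theta>} \<Longrightarrow> norm (y \<tau>) \<le> 2*R \<Longrightarrow> norm (y' \<tau>) \<le> K"
  shows "\<forall>\<tau>\<in>{0..\<theta>}. norm (y \<tau> - v0) \<le> K*\<tau>"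
proof (rule cont_induct[OF th])
  have cy: "continuous_on {0..\<theta>} y" by (rule continuous_on_vector_derivative[OF der])
  show "norm (y 0 - v0) \<le> K * 0" using y0 by simp
  show "norm (y t - v0) \<le> K * t" if t: "0 < t" "t \<le> \<theta>" and b: "\<forall>s\<in>{0..<t}. norm (y s - v0) \<le> K * s" for t
  proof -
    have c: "continuous_on (closure {0..<t}) (\<lambda>s. K * s - norm (y s - v0))"
      using t by (auto intro!: continuous_intros continuous_on_subset[OF cy])
    have "0 \<le> K * t - norm (y t - v0)"
      by (rule continuous_ge_on_closure[OF c]) (use t b in auto)
    then show ?thesis by simp
  qed
  show "\<exists>d>0. \<forall>s\<in>{t..t+d}. norm (y s - v0) \<le> K * s"
    if t: "0 \<le> t" "t < \<theta>" and b: "\<forall>s\<in>{0..t}. norm (y s - v0) \<le> K * s" for t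
  proof -
    have "norm (y t) \<le> norm v0 + norm (y t - v0)" using norm_triangle_ineq[of v0 "y t - v0"] by simp
    also have "\<dots> \<le> R + K * t" using b t y0 by auto
    also have "\<dots> < 2 * R" using K t mult_strict_left_mono[OF t(2) K(1)] by linarith
    finally have lt: "norm (y t) < 2 * R" .
    have "t \<in> {0..\<theta>}" using t by auto
    then have "\<forall>e>0. \<exists>d>0. \<forall>x'\<in>{0..\<theta>}. dist x' t < d \<longrightarrow> dist (y x') (y t) < e"
      using cy unfolding continuous_on_iff by blast
    moreover have "2*R - norm (y t) > 0" using lt by simp
    ultimately obtain d where d: "d > 0" "\<And>x'. x' \<in> {0..\<theta>} \<Longrightarrow> dist x' t < d \<Longrightarrow> dist (y x') (y t) < 2*R - norm (y t)"
      by blast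
    define d' where "d' = min (d/2) (\<theta> - t)"
    have d'0: "d' > 0" using d t by (simp add: d'_def)
    have "norm (y s - v0) \<le> K * s" if s: "s \<in> {t..t+d'}" for s
    proof -
      have inb: "norm (y x) \<le> 2*R" if x: "x \<in> {t..s}" for x
      proof -
        have "x \<in> {0..\<theta>}" "dist x t < d" using x s t d by (auto simp: d'_def dist_real_def)
        then have "dist (y x) (y t) < 2*R - norm (y t)" by (rule d(2))
        moreover have "norm (y x) \<le> norm (y t) + norm (y x - y t)" using norm_triangle_ineq[of "y t" "y x - y t"] by simp
        ultimately show ?thesis by (simp add: dist_norm)
      qed
      have sth: "{t..s} \<subseteq> {0..\<theta>}" using s t by (auto simp: d'_def)
      have "norm (y s - y t) \<le> K * (s - t)"
      proof (rule mvt_bound)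
        show "t \<le> s" using s by auto
        show "(y has_vector_derivative y' x) (at x within {t..s})" if "x \<in> {t..s}" for x
          using der[of x] sth that by (auto intro: has_vector_derivative_within_subset)
        show "norm (y' x) \<le> K" if "x \<in> {t..s}" for x
          using bnd[of x] sth that inb[OF that] by auto
      qed
      moreover have "norm (y s - v0) \<le> norm (y s - y t) + norm (y t - v0)"
        using norm_triangle_ineq[of "y s - y t" "y t - v0"] by simp
      moreover have "norm (y t - v0) \<le> K * t" using b t by auto
      ultimately show ?thesis by (simp add: algebra_simps)
    qed
    then show ?thesis using d'0 by blast
  qed
qed


lemma c_deriv:
  fixes v :: "real \<Rightarrow> complex^'n"
  assumes "(v has_vector_derivative (\<chi> j. - \<i> * complex_of_real (\<Lambda> $ j) * (v t $ j)
                 + complex_of_real \<epsilon> * (P (v t) $ j))) (at t within S)"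
  shows "((\<lambda>t. Phi (t *\<^sub>R \<Lambda>) (v t)) has_vector_derivative \<epsilon> *\<^sub>R Fv \<Lambda> P t (Phi (t *\<^sub>R \<Lambda>) (v t))) (at t within S)"
proof (rule vec_vd)
  fix j
  define c where "c = \<i> * complex_of_real (\<Lambda> $ j)"
  have eqf: "(\<lambda>t. Phi (t *\<^sub>R \<Lambda>) (v t) $ j) = (\<lambda>t. exp (t *\<^sub>R c) * v t $ j)"
    by (simp only: Phi_def vec_lambda_beta e1 c_def)
  have D: "((\<lambda>t. exp (t *\<^sub>R c) * v t $ j) has_vector_derivative
      exp (t *\<^sub>R c) * (- \<i> * complex_of_real (\<Lambda> $ j) * (v t $ j) + complex_of_real \<epsilon> * (P (v t) $ j))
      + exp (t *\<^sub>R c) * c * v t $ j) (at t within S)"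
    using bounded_bilinear.has_vector_derivative[OF bounded_bilinear_mult exp_scaleR_has_vector_derivative_right vec_vd_nth[OF assms, of j]]
    by simp
  have eq: "exp (t *\<^sub>R c) * (- \<i> * complex_of_real (\<Lambda> $ j) * (v t $ j) + complex_of_real \<epsilon> * (P (v t) $ j))
      + exp (t *\<^sub>R c) * c * v t $ j = (\<epsilon> *\<^sub>R Fv \<Lambda> P t (Phi (t *\<^sub>R \<Lambda>) (v t))) $ j"
  proof -
    have r: "(\<epsilon> *\<^sub>R Fv \<Lambda> P t (Phi (t *\<^sub>R \<Lambda>) (v t))) $ j = complex_of_real \<epsilon> * (exp (t *\<^sub>R c) * P (v t) $ j)"
      by (simp only: Fv_def Phi_inv vector_scaleR_component) (simp only: Phi_def vec_lambda_beta e1 c_def, simp only: scaleR_conv_of_real)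
    show ?thesis unfolding r by (simp add: c_def algebra_simps)
  qed
  show "((\<lambda>x. Phi (x *\<^sub>R \<Lambda>) (v x) $ j) has_vector_derivative (\<epsilon> *\<^sub>R Fv \<Lambda> P t (Phi (t *\<^sub>R \<Lambda>) (v t))) $ j) (at t within S)"
    unfolding eqf eq[symmetric] by (rule D)
qed

lemma b_deriv:
  fixes v :: "real \<Rightarrow> complex^'n"
  assumes e: "\<epsilon> > 0" and th: "\<theta> \<ge> 0"
    and vd: "\<forall>t\<in>{0..\<theta>/\<epsilon>}. (v has_vector_derivative (\<chi> j. - \<i> * complex_of_real (\<Lambda> $ j) * (v t $ j)
                 + complex_of_real \<epsilon> * (P (v t) $ j))) (at t within {0..\<theta>/\<epsilon>})"
    and tau: "\<tau> \<in> {0..\<theta>}"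
  shows "((\<lambda>\<tau>. Phi ((\<tau>/\<epsilon>) *\<^sub>R \<Lambda>) (v (\<tau>/\<epsilon>))) has_vector_derivative
           Fv \<Lambda> P (\<tau>/\<epsilon>) (Phi ((\<tau>/\<epsilon>) *\<^sub>R \<Lambda>) (v (\<tau>/\<epsilon>)))) (at \<tau> within {0..\<theta>})"
proof -
  have t1: "\<tau>/\<epsilon> \<in> {0..\<theta>/\<epsilon>}" using tau e by (auto simp: divide_right_mono)
  have cd: "((\<lambda>t. Phi (t *\<^sub>R \<Lambda>) (v t)) has_vector_derivative \<epsilon> *\<^sub>R Fv \<Lambda> P (\<tau>/\<epsilon>) (Phi ((\<tau>/\<epsilon>) *\<^sub>R \<Lambda>) (v (\<tau>/\<epsilon>))))
      (at (\<tau>/\<epsilon>) within (\<lambda>x. x/\<epsilon>) ` {0..\<theta>})"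
    by (rule has_vector_derivative_within_subset[OF c_deriv[where v=v and \<Lambda>=\<Lambda> and \<epsilon>=\<epsilon> and P=P, OF vd[rule_format, OF t1]]])
       (use e in \<open>auto simp: divide_right_mono\<close>)
  have dd: "((\<lambda>x. x/\<epsilon>) has_vector_derivative 1/\<epsilon>) (at \<tau> within {0..\<theta>})"
    unfolding has_real_derivative_iff_has_vector_derivative[symmetric]
    using e by (auto intro!: derivative_eq_intros)
  have "((\<lambda>t. Phi (t *\<^sub>R \<Lambda>) (v t)) \<circ> (\<lambda>x. x/\<epsilon>) has_vector_derivative
      (1/\<epsilon>) *\<^sub>R (\<epsilon> *\<^sub>R Fv \<Lambda> P (\<tau>/\<epsilon>) (Phi ((\<tau>/\<epsilon>) *\<^sub>R \<Lambda>) (v (\<tau>/\<epsilon>))))) (at \<tau> within {0..\<theta>})"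
    by (rule vector_diff_chain_within[OF dd]) (use cd in simp)
  then show ?thesis using e by (simp add: o_def)
qed

locale avsetup =
  fixes \<Lambda> :: "real^'n" and P :: "complex^'n \<Rightarrow> complex^'n" and X :: "real \<Rightarrow> real"
    and v0 :: "complex^'n" and R \<theta> :: real and G :: "complex^'n \<Rightarrow> complex^'n" and a :: "real \<Rightarrow> complex^'n"
  assumes Lip: "Lip_X X P" and Rdef: "norm v0 = R" and Rpos: "R > 0" and X2R: "X (2*R) > 0"
    and thdef: "\<theta> = R / X (2*R)"
    and Gm: "\<And>z. mean_fwd (\<lambda>t. Fv \<Lambda> P t z) (G z)"
    and a0: "a 0 = v0" and ader: "\<And>\<tau>. \<tau>\<in>{0..\<theta>} \<Longrightarrow> (a has_vector_derivative G (a \<tau>)) (at \<tau> within {0..\<theta>})"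
begin

abbreviation "K \<equiv> X (2*R)"

lemma th_pos: "\<theta> > 0" using Rpos X2R thdef by simp

lemma Kth: "K * \<theta> = R" using X2R thdef by simp

lemma cP: "continuous_on UNIV P" using LipD(3)[OF Lip, of 0] by simp

lemma G_bnd: "norm z \<le> 2*R \<Longrightarrow> norm (G z) \<le> K"
  using G_bound[OF Lip _ _ Gm] Rpos by simp

lemma G_lipK: "norm x \<le> 2*R \<Longrightarrow> norm y \<le> 2*R \<Longrightarrow> norm (G x - G y) \<le> K * norm (x - y)"
  using G_lip[OF Lip _ _ _ Gm Gm] Rpos by simp

lemma F_bnd: "norm z \<le> 2*R \<Longrightarrow> norm (Fv \<Lambda> P t z) \<le> K"
  using Fv_bound[OF Lip] Rpos by simp

lemma F_lipK: "norm x \<le> 2*R \<Longrightarrow> norm y \<le> 2*R \<Longrightarrow> norm (Fv \<Lambda> P t x - Fv \<Lambda> P t y) \<le> K * norm (x - y)"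
  using Fv_lip[OF Lip] Rpos by simp

lemma traj_ball:
  assumes y0: "y 0 = v0"
    and der: "\<And>\<tau>. \<tau>\<in>{0..\<theta>} \<Longrightarrow> (y has_vector_derivative y' \<tau>) (at \<tau> within {0..\<theta>})"
    and bnd: "\<And>\<tau>. \<tau>\<in>{0..\<theta>} \<Longrightarrow> norm (y \<tau>) \<le> 2*R \<Longrightarrow> norm (y' \<tau>) \<le> K"
    and tau: "\<tau> \<in> {0..\<theta>}"
  shows "norm (y \<tau>) \<le> 2*R"
proof -
  have "norm (y \<tau> - v0) \<le> K * \<tau>"
    using stay_ball[of \<theta> K R y v0 y', OF _ _ _ y0 Rdef der bnd] th_pos X2R Kth tau by auto
  also have "\<dots> \<le> K * \<theta>" using tau X2R by (auto intro: mult_left_mono)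
  finally have "norm (y \<tau> - v0) \<le> R" using Kth by simp
  then show ?thesis using norm_triangle_ineq[of v0 "y \<tau> - v0"] Rdef by simp
qed

lemma a_ball: "\<tau> \<in> {0..\<theta>} \<Longrightarrow> norm (a \<tau>) \<le> 2*R"
  by (rule traj_ball[OF a0 ader G_bnd])

lemma a_cont: "continuous_on {0..\<theta>} a"
  by (rule continuous_on_vector_derivative[OF ader])

end


context avsetup begin

lemma err_bound:
  assumes e: "\<epsilon> > 0"
    and b0: "b 0 = v0"
    and bder: "\<And>\<tau>. \<tau>\<in>{0..\<theta>} \<Longrightarrow> (b has_vector_derivative Fv \<Lambda> P (\<tau>/\<epsilon>) (b \<tau>)) (at \<tau> within {0..\<theta>})"
    and dl: "\<And>\<tau>. \<tau>\<in>{0..\<theta>} \<Longrightarrow> norm (integral {0..\<tau>} (\<lambda>s. Fv \<Lambda> P (s/\<epsilon>) (a s) - G (a s))) \<le> \<eta>"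
    and eta: "\<eta> \<ge> 0"
    and tau: "\<tau> \<in> {0..\<theta>}"
  shows "norm (b \<tau> - a \<tau>) \<le> 2*\<eta>*exp(2*K*\<theta>)"
proof -
  have K0: "K > 0" using X2R .
  have bb: "norm (b t) \<le> 2*R" if "t\<in>{0..\<theta>}" for t by (rule traj_ball[OF b0 bder F_bnd that])
  have ab: "norm (a t) \<le> 2*R" if "t\<in>{0..\<theta>}" for t by (rule a_ball[OF that])
  have cb: "continuous_on {0..\<theta>} b" by (rule continuous_on_vector_derivative[OF bder])
  have ca: "continuous_on {0..\<theta>} a" by (rule a_cont)
  have cFa: "continuous_on {0..\<theta>} (\<lambda>s. Fv \<Lambda> P (s/\<epsilon>) (a s))"
    by (rule cont_Fv[OF cP _ ca]) (use e in \<open>auto intro!: continuous_intros\<close>)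
  have cFb: "continuous_on {0..\<theta>} (\<lambda>s. Fv \<Lambda> P (s/\<epsilon>) (b s))"
    by (rule cont_Fv[OF cP _ cb]) (use e in \<open>auto intro!: continuous_intros\<close>)
  have sub: "{0..t} \<subseteq> {0..\<theta>}" if "t\<in>{0..\<theta>}" for t using that by auto
  have e_int: "((\<lambda>s. Fv \<Lambda> P (s/\<epsilon>) (b s) - G (a s)) has_integral (b t - a t)) {0..t}" if t: "t\<in>{0..\<theta>}" for t
  proof -
    have "((\<lambda>s. Fv \<Lambda> P (s/\<epsilon>) (b s) - G (a s)) has_integral ((b t - a t) - (b 0 - a 0))) {0..t}"
    proof (rule fundamental_theorem_of_calculus)
      show "0 \<le> t" using t by auto
      show "((\<lambda>s. b s - a s) has_vector_derivative Fv \<Lambda> P (x/\<epsilon>) (b x) - G (a x)) (at x within {0..t})"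
        if "x \<in> {0..t}" for x
        using that sub[OF t]
        by (intro has_vector_derivative_diff has_vector_derivative_within_subset[OF bder] has_vector_derivative_within_subset[OF ader]) auto
    qed
    then show ?thesis using b0 a0 by simp
  qed
  have Ga_int: "(\<lambda>s. G (a s)) integrable_on {0..t}" if t: "t\<in>{0..\<theta>}" for t
  proof -
    have "((\<lambda>s. G (a s)) has_integral (a t - a 0)) {0..t}"
    proof (rule fundamental_theorem_of_calculus)
      show "0 \<le> t" using t by auto
      show "(a has_vector_derivative G (a x)) (at x within {0..t})" if "x \<in> {0..t}" for x
        using that sub[OF t] by (intro has_vector_derivative_within_subset[OF ader]) auto
    qed
    then show ?thesis by blast
  qed
  have Fa_int: "(\<lambda>s. Fv \<Lambda> P (s/\<epsilon>) (a s)) integrable_on {0..t}" if t: "t\<in>{0..\<theta>}" for t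
    by (rule integrable_continuous_interval[OF continuous_on_subset[OF cFa sub[OF t]]])
  have Fb_int: "(\<lambda>s. Fv \<Lambda> P (s/\<epsilon>) (b s)) integrable_on {0..t}" if t: "t\<in>{0..\<theta>}" for t
    by (rule integrable_continuous_interval[OF continuous_on_subset[OF cFb sub[OF t]]])
  define w where "w t = integral {0..t} (\<lambda>s. Fv \<Lambda> P (s/\<epsilon>) (b s) - Fv \<Lambda> P (s/\<epsilon>) (a s))" for t
  define \<delta> where "\<delta> t = integral {0..t} (\<lambda>s. Fv \<Lambda> P (s/\<epsilon>) (a s) - G (a s))" for t
  have split: "b t - a t = w t + \<delta> t" if t: "t\<in>{0..\<theta>}" for t
  proof -
    have "integral {0..t} (\<lambda>s. (Fv \<Lambda> P (s/\<epsilon>) (b s) - Fv \<Lambda> P (s/\<epsilon>) (a s)) + (Fv \<Lambda> P (s/\<epsilon>) (a s) - G (a s))) = w t + \<delta> t"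
      unfolding w_def \<delta>_def
      by (intro integral_add integrable_diff Fa_int Fb_int Ga_int t)
    moreover have "integral {0..t} (\<lambda>s. (Fv \<Lambda> P (s/\<epsilon>) (b s) - Fv \<Lambda> P (s/\<epsilon>) (a s)) + (Fv \<Lambda> P (s/\<epsilon>) (a s) - G (a s)))
       = b t - a t"
      using integral_unique[OF e_int[OF t]] by simp
    ultimately show ?thesis by simp
  qed
  define ph where "ph = (\<lambda>s. norm (b s - a s) / exp (2*K* s))"
  have cphi: "continuous_on {0..\<theta>} ph" unfolding ph_def by (intro continuous_intros cb ca) auto
  obtain ts where ts: "ts \<in> {0..\<theta>}" "\<And>s. s \<in> {0..\<theta>} \<Longrightarrow> ph s \<le> ph ts"
    using continuous_attains_sup[OF compact_Icc _ cphi] th_pos by fastforce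
  define N where "N = ph ts"
  have N0: "N \<ge> 0" by (simp add: N_def ph_def)
  have nrm: "norm (b s - a s) = exp (2*K* s) * ph s" for s
    by (simp add: ph_def)
  have le: "norm (b s - a s) \<le> N * exp (2*K* s)" if s: "s \<in> {0..\<theta>}" for s
    unfolding nrm N_def using ts(2)[OF s] by (simp add: mult.commute)
  have der_exp: "((\<lambda>s. N/2 * exp (2*K* s)) has_vector_derivative K * (N * exp (2*K* s))) (at s within S)" for s S
  proof -
    have "((\<lambda>s. N/2 * exp (2*K* s)) has_real_derivative K * (N * exp (2*K* s))) (at s within S)"
      by (auto intro!: derivative_eq_intros simp: field_simps)
    then show ?thesis by (simp add: has_real_derivative_iff_has_vector_derivative)
  qed
  have int_exp: "((\<lambda>s. K * (N * exp (2*K* s))) has_integral (N/2 * exp (2*K*ts) - N/2)) {0..ts}"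
    using fundamental_theorem_of_calculus[of 0 ts "\<lambda>s. N/2 * exp (2*K* s)" "\<lambda>s. K * (N * exp (2*K* s))"] der_exp ts(1)
    by simp
  have wb: "norm (w ts) \<le> N/2 * exp (2*K*ts) - N/2"
  proof -
    have "norm (w ts) \<le> integral {0..ts} (\<lambda>s. K * (N * exp (2*K* s)))"
      unfolding w_def
    proof (rule integral_norm_bound_integral)
      show "(\<lambda>s. Fv \<Lambda> P (s/\<epsilon>) (b s) - Fv \<Lambda> P (s/\<epsilon>) (a s)) integrable_on {0..ts}"
        by (intro integrable_diff Fa_int Fb_int ts(1))
      show "(\<lambda>s. K * (N * exp (2*K* s))) integrable_on {0..ts}" using int_exp by blast
      fix s assume s: "s \<in> {0..ts}"
      then have s': "s \<in> {0..\<theta>}" using ts(1) by auto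
      have "norm (Fv \<Lambda> P (s/\<epsilon>) (b s) - Fv \<Lambda> P (s/\<epsilon>) (a s)) \<le> K * norm (b s - a s)"
        by (rule F_lipK[OF bb[OF s'] ab[OF s']])
      also have "\<dots> \<le> K * (N * exp (2*K* s))" by (rule mult_left_mono[OF le[OF s']]) (use K0 in simp)
      finally show "norm (Fv \<Lambda> P (s/\<epsilon>) (b s) - Fv \<Lambda> P (s/\<epsilon>) (a s)) \<le> K * (N * exp (2*K* s))" .
    qed
    also have "\<dots> = N/2 * exp (2*K*ts) - N/2" using integral_unique[OF int_exp] .
    finally show ?thesis .
  qed
  have "norm (b ts - a ts) \<le> norm (w ts) + norm (\<delta> ts)"
    unfolding split[OF ts(1)] by (rule norm_triangle_ineq)
  moreover have "norm (\<delta> ts) \<le> \<eta>" unfolding \<delta>_def by (rule dl[OF ts(1)])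
  moreover have "norm (b ts - a ts) = N * exp (2*K*ts)" unfolding nrm N_def by simp
  moreover have "N \<le> N * exp (2*K*ts)"
  proof -
    have "1 \<le> exp (2*K * ts)" using K0 ts(1) by simp
    from mult_left_mono[OF this N0] show ?thesis by simp
  qed
  moreover have "N/2 * exp (2*K*ts) = (N * exp (2*K*ts))/2" by simp
  ultimately have N2: "N \<le> 2*\<eta>" using wb N0 eta by linarith
  have "norm (b \<tau> - a \<tau>) \<le> N * exp (2*K*\<tau>)" by (rule le[OF tau])
  also have "\<dots> \<le> 2*\<eta>*exp (2*K*\<theta>)"
    by (rule mult_mono[OF N2]) (use tau K0 eta in auto)
  finally show ?thesis .
qed

end

lemma subst_int:
  assumes cP: "continuous_on UNIV P" and e: "\<epsilon> > 0" and ab: "0 \<le> \<alpha>" "\<alpha> \<le> \<beta>"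
  shows "((\<lambda>s. Fv \<Lambda> P (s/\<epsilon>) z) has_integral
     \<epsilon> *\<^sub>R (integral {0..\<beta>/\<epsilon>} (\<lambda>t. Fv \<Lambda> P t z) - integral {0..\<alpha>/\<epsilon>} (\<lambda>t. Fv \<Lambda> P t z))) {\<alpha>..\<beta>}"
proof -
  define I where "I T = integral {0..T} (\<lambda>t. Fv \<Lambda> P t z)" for T
  have cF: "continuous_on {0..\<beta>/\<epsilon>} (\<lambda>t. Fv \<Lambda> P t z)" by (rule cont_Fv_t[OF cP])
  have dI: "(I has_vector_derivative Fv \<Lambda> P T z) (at T within {0..\<beta>/\<epsilon>})" if "T \<in> {0..\<beta>/\<epsilon>}" for T
    unfolding I_def by (rule integral_has_vector_derivative[OF cF that])
  have der: "((\<lambda>s. \<epsilon> *\<^sub>R I (s/\<epsilon>)) has_vector_derivative Fv \<Lambda> P (x/\<epsilon>) z) (at x within {\<alpha>..\<beta>})"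
    if x: "x \<in> {\<alpha>..\<beta>}" for x
  proof -
    have xs: "x/\<epsilon> \<in> {0..\<beta>/\<epsilon>}" using x ab e by (auto simp: divide_right_mono)
    have sub: "(\<lambda>x. x/\<epsilon>) ` {\<alpha>..\<beta>} \<subseteq> {0..\<beta>/\<epsilon>}" using ab e by (auto simp: divide_right_mono)
    have dd: "((\<lambda>x. x/\<epsilon>) has_vector_derivative 1/\<epsilon>) (at x within {\<alpha>..\<beta>})"
      unfolding has_real_derivative_iff_has_vector_derivative[symmetric]
      using e by (auto intro!: derivative_eq_intros)
    have "(I \<circ> (\<lambda>x. x/\<epsilon>) has_vector_derivative (1/\<epsilon>) *\<^sub>R Fv \<Lambda> P (x/\<epsilon>) z) (at x within {\<alpha>..\<beta>})"
      by (rule vector_diff_chain_within[OF dd has_vector_derivative_within_subset[OF dI[OF xs] sub]])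
    then have "((\<lambda>s. \<epsilon> *\<^sub>R (I \<circ> (\<lambda>x. x/\<epsilon>)) s) has_vector_derivative \<epsilon> *\<^sub>R ((1/\<epsilon>) *\<^sub>R Fv \<Lambda> P (x/\<epsilon>) z)) (at x within {\<alpha>..\<beta>})"
      by (rule bounded_linear.has_vector_derivative[OF bounded_linear_scaleR_right])
    then show ?thesis using e by (simp add: o_def)
  qed
  have "((\<lambda>s. Fv \<Lambda> P (s/\<epsilon>) z) has_integral (\<epsilon> *\<^sub>R I (\<beta>/\<epsilon>) - \<epsilon> *\<^sub>R I (\<alpha>/\<epsilon>))) {\<alpha>..\<beta>}"
    using fundamental_theorem_of_calculus[OF ab(2), of "\<lambda>s. \<epsilon> *\<^sub>R I (s/\<epsilon>)" "\<lambda>s. Fv \<Lambda> P (s/\<epsilon>) z"] der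
    by simp
  then show ?thesis by (simp add: I_def scaleR_diff_right)
qed

lemma int_bound_const:
  fixes f :: "real \<Rightarrow> 'a::banach"
  assumes "f integrable_on {c..d}" "c \<le> d" "\<And>s. s \<in> {c..d} \<Longrightarrow> norm (f s) \<le> B"
  shows "norm (integral {c..d} f) \<le> B * (d - c)"
proof -
  have "norm (integral {c..d} f) \<le> integral {c..d} (\<lambda>s. B)"
    by (rule integral_norm_bound_integral) (use assms in auto)
  also have "\<dots> = B * (d - c)" using assms(2) by (simp add: integral_const_real)
  finally show ?thesis .
qed

context avsetup begin

lemma o_bound:
  assumes z: "norm z \<le> 2*R" and T1: "T1 > 0" and g: "\<gamma> \<ge> 0"
    and conv: "\<And>T. T \<ge> T1 \<Longrightarrow> norm ((1/T) *\<^sub>R integral {0..T} (\<lambda>t. Fv \<Lambda> P t z) - G z) \<le> \<gamma>"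
    and T: "T \<ge> 0"
  shows "norm (integral {0..T} (\<lambda>t. Fv \<Lambda> P t z) - T *\<^sub>R G z) \<le> \<gamma>*T + 2*K*T1"
proof (cases "T \<ge> T1")
  case True
  then have Tp: "T > 0" using T1 by simp
  have "integral {0..T} (\<lambda>t. Fv \<Lambda> P t z) - T *\<^sub>R G z = T *\<^sub>R ((1/T) *\<^sub>R integral {0..T} (\<lambda>t. Fv \<Lambda> P t z) - G z)"
    using Tp by (simp add: scaleR_diff_right)
  then have "norm (integral {0..T} (\<lambda>t. Fv \<Lambda> P t z) - T *\<^sub>R G z) = T * norm ((1/T) *\<^sub>R integral {0..T} (\<lambda>t. Fv \<Lambda> P t z) - G z)"
    using Tp by simp
  also have "\<dots> \<le> T * \<gamma>" using conv[OF True] Tp by (simp add: mult_left_mono)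
  finally have n: "norm (integral {0..T} (\<lambda>t. Fv \<Lambda> P t z) - T *\<^sub>R G z) \<le> T * \<gamma>" .
  have "0 \<le> 2*K*T1" using X2R T1 by simp
  from add_increasing2[OF this n] show ?thesis by (simp add: mult.commute)
next
  case False
  have K0: "K > 0" using X2R .
  have "norm (integral {0..T} (\<lambda>t. Fv \<Lambda> P t z)) \<le> K * (T - 0)"
    by (rule int_bound_const[OF integrable_continuous_interval[OF cont_Fv_t[OF cP]] T F_bnd[OF z]])
  moreover have "norm (T *\<^sub>R G z) \<le> T * K" using G_bnd[OF z] T by (simp add: mult_left_mono)
  moreover have "norm (integral {0..T} (\<lambda>t. Fv \<Lambda> P t z) - T *\<^sub>R G z)
      \<le> norm (integral {0..T} (\<lambda>t. Fv \<Lambda> P t z)) + norm (T *\<^sub>R G z)" by (rule norm_triangle_ineq4)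
  moreover have "K * T \<le> K * T1" using False K0 by simp
  moreover have "0 \<le> \<gamma> * T" using g T by simp
  ultimately show ?thesis by (simp add: algebra_simps)
qed


lemma delta_small:
  assumes eta: "\<eta> > 0"
  shows "\<forall>\<^sub>F \<epsilon> in at_right 0. \<forall>\<tau>\<in>{0..\<theta>}. norm (integral {0..\<tau>} (\<lambda>s. Fv \<Lambda> P (s/\<epsilon>) (a s) - G (a s))) \<le> \<eta>"
proof -
  have K0: "K > 0" using X2R .
  have th0: "\<theta> > 0" by (rule th_pos)
  define \<rho> where "\<rho> = \<eta> / (8*K*\<theta>)"
  have rho0: "\<rho> > 0" using eta K0 th0 by (simp add: \<rho>_def)
  have uc: "uniformly_continuous_on {0..\<theta>} a"
    by (rule compact_uniformly_continuous[OF a_cont compact_Icc])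
  obtain d where d0: "d > 0" and d: "\<And>x x'. x\<in>{0..\<theta>} \<Longrightarrow> x'\<in>{0..\<theta>} \<Longrightarrow> dist x' x < d \<Longrightarrow> dist (a x') (a x) < \<rho>"
    using uc[unfolded uniformly_continuous_on_def, rule_format, OF rho0] by blast
  obtain N :: nat where N: "max (\<theta>/d) (8*K*\<theta>/\<eta>) < real N"
    using reals_Archimedean2 by blast
  have Nd: "\<theta>/d < real N" and NK: "8*K*\<theta>/\<eta> < real N" using N by auto
  have N0: "real N > 0" using Nd th0 d0 by (smt (verit) divide_pos_pos)
  define h where "h = \<theta> / real N"
  have h0: "h > 0" using th0 N0 by (simp add: h_def)
  have hd: "h < d" using Nd d0 N0 by (simp add: h_def divide_simps mult.commute)
  have hK: "2*K*h \<le> \<eta>/4"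
  proof -
    have "8*K*\<theta> < \<eta> * real N" using NK eta by (simp add: divide_simps mult.commute)
    then show ?thesis using N0 by (simp add: h_def divide_simps)
  qed
  define g where "g k = real k * h" for k :: nat
  have gN: "g N = \<theta>" using N0 by (simp add: g_def h_def)
  have gS: "g (Suc k) = g k + h" for k by (simp add: g_def algebra_simps)
  have g0: "g k \<ge> 0" for k using h0 by (simp add: g_def)
  have gle: "g k \<le> \<theta>" if "k \<le> N" for k
  proof -
    have "real k * h \<le> real N * h" using that h0 by (intro mult_right_mono) auto
    then show ?thesis using gN by (simp add: g_def)
  qed
  define z where "z k = a (g k)" for k
  have zb: "norm (z k) \<le> 2*R" if "k \<le> N" for k
    unfolding z_def using a_ball g0 gle[OF that] by auto
  define \<gamma> where "\<gamma> = \<eta> / (8 * real N * \<theta>)"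
  have ga0: "\<gamma> > 0" using eta N0 th0 by (simp add: \<gamma>_def)
  define I where "I k T = integral {0..T} (\<lambda>t. Fv \<Lambda> P t (z k))" for k T
  have "\<forall>\<^sub>F T in at_top. \<forall>k\<in>{..<N}. dist ((1/T) *\<^sub>R I k T) (G (z k)) < \<gamma>"
    by (rule eventually_ball_finite)
       (auto simp: I_def intro!: tendstoD[OF Gm[unfolded mean_fwd_def]] ga0)
  then obtain T0 where T0: "\<And>T k. T \<ge> T0 \<Longrightarrow> k < N \<Longrightarrow> dist ((1/T) *\<^sub>R I k T) (G (z k)) < \<gamma>"
    unfolding eventually_at_top_linorder by blast
  define T1 where "T1 = max T0 1"
  have T10: "T1 > 0" by (simp add: T1_def)
  have ob: "norm (I k T - T *\<^sub>R G (z k)) \<le> \<gamma>*T + 2*K*T1" if k: "k < N" and T: "T \<ge> 0" for k T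
    unfolding I_def
  proof (rule o_bound[OF zb T10 less_imp_le[OF ga0] _ T])
    show "k \<le> N" using k by simp
    fix T' assume "T' \<ge> T1"
    then have "T' \<ge> T0" by (simp add: T1_def)
    then show "norm ((1/T') *\<^sub>R integral {0..T'} (\<lambda>t. Fv \<Lambda> P t (z k)) - G (z k)) \<le> \<gamma>"
      using T0[of T' k] k by (simp add: I_def dist_norm)
  qed
  define \<epsilon>0 where "\<epsilon>0 = \<eta> / (16 * real N * K * T1)"
  have e00: "\<epsilon>0 > 0" using eta N0 K0 T10 by (simp add: \<epsilon>0_def)
  show ?thesis
    unfolding eventually_at_right_field
  proof (rule exI[of _ \<epsilon>0], intro conjI allI impI ballI)
    show "0 < \<epsilon>0" by (rule e00)
    fix \<epsilon> \<tau> :: real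
    assume e: "0 < \<epsilon>" and ee: "\<epsilon> < \<epsilon>0" and tau: "\<tau> \<in> {0..\<theta>}"
    define f where "f s = Fv \<Lambda> P (s/\<epsilon>) (a s) - G (a s)" for s
    have cFa: "continuous_on {0..\<theta>} (\<lambda>s. Fv \<Lambda> P (s/\<epsilon>) (a s))"
      by (rule cont_Fv[OF cP _ a_cont]) (use e in \<open>auto intro!: continuous_intros\<close>)
    have Ga_int: "(\<lambda>s. G (a s)) integrable_on {0..\<theta>}"
    proof -
      have "((\<lambda>s. G (a s)) has_integral (a \<theta> - a 0)) {0..\<theta>}"
        by (rule fundamental_theorem_of_calculus) (use th0 ader in auto)
      then show ?thesis by blast
    qed
    have fint: "f integrable_on {0..\<theta>}"
      unfolding f_def by (intro integrable_diff integrable_continuous_interval cFa Ga_int)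
    have fsub: "f integrable_on {c..d'}" if "0 \<le> c" "d' \<le> \<theta>" for c d'
      by (rule integrable_subinterval_real[OF fint]) (use that in auto)
    have fb: "norm (f s) \<le> 2*K" if "s \<in> {0..\<theta>}" for s
    proof -
      have "norm (f s) \<le> norm (Fv \<Lambda> P (s/\<epsilon>) (a s)) + norm (G (a s))"
        unfolding f_def by (rule norm_triangle_ineq4)
      also have "\<dots> \<le> K + K" by (intro add_mono F_bnd G_bnd a_ball that)
      finally show ?thesis by simp
    qed
    define c where "c = 2*K*\<rho>*h + 2*\<gamma>*\<theta> + 4*K*T1*\<epsilon>"
    have piece: "norm (integral {g k..g (Suc k)} f) \<le> c" if k: "k < N" for k
    proof -
      have gk: "0 \<le> g k" "g k \<le> g (Suc k)" "g (Suc k) \<le> \<theta>"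
        using g0 gS h0 gle[of "Suc k"] k by auto
      define q where "q s = Fv \<Lambda> P (s/\<epsilon>) (z k) - G (z k)" for s
      have qint: "(q has_integral (\<epsilon> *\<^sub>R (I k (g (Suc k)/\<epsilon>) - I k (g k/\<epsilon>)) - (g (Suc k) - g k) *\<^sub>R G (z k))) {g k..g (Suc k)}"
        unfolding q_def I_def
        using has_integral_diff[OF subst_int[OF cP e gk(1,2)] has_integral_const_real[of "G (z k)" "g k" "g (Suc k)"]] gk
        by simp
      have qval: "\<epsilon> *\<^sub>R (I k (g (Suc k)/\<epsilon>) - I k (g k/\<epsilon>)) - (g (Suc k) - g k) *\<^sub>R G (z k)
          = \<epsilon> *\<^sub>R ((I k (g (Suc k)/\<epsilon>) - (g (Suc k)/\<epsilon>) *\<^sub>R G (z k)) - (I k (g k/\<epsilon>) - (g k/\<epsilon>) *\<^sub>R G (z k)))"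
        using e by (simp add: algebra_simps)
      have o1: "norm (I k (g (Suc k)/\<epsilon>) - (g (Suc k)/\<epsilon>) *\<^sub>R G (z k)) \<le> \<gamma>*(g (Suc k)/\<epsilon>) + 2*K*T1"
        by (rule ob[OF k]) (use gk e in simp)
      have o2: "norm (I k (g k/\<epsilon>) - (g k/\<epsilon>) *\<^sub>R G (z k)) \<le> \<gamma>*(g k/\<epsilon>) + 2*K*T1"
        by (rule ob[OF k]) (use gk e in simp)
      have "norm (integral {g k..g (Suc k)} q) \<le> \<epsilon> * ((\<gamma>*(g (Suc k)/\<epsilon>) + 2*K*T1) + (\<gamma>*(g k/\<epsilon>) + 2*K*T1))"
      proof -
        have "norm (integral {g k..g (Suc k)} q) = \<epsilon> * norm ((I k (g (Suc k)/\<epsilon>) - (g (Suc k)/\<epsilon>) *\<^sub>R G (z k)) - (I k (g k/\<epsilon>) - (g k/\<epsilon>) *\<^sub>R G (z k)))"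
          unfolding integral_unique[OF qint] qval using e by simp
        also have "\<dots> \<le> \<epsilon> * (norm (I k (g (Suc k)/\<epsilon>) - (g (Suc k)/\<epsilon>) *\<^sub>R G (z k)) + norm (I k (g k/\<epsilon>) - (g k/\<epsilon>) *\<^sub>R G (z k)))"
          using e by (intro mult_left_mono norm_triangle_ineq4) auto
        also have "\<dots> \<le> \<epsilon> * ((\<gamma>*(g (Suc k)/\<epsilon>) + 2*K*T1) + (\<gamma>*(g k/\<epsilon>) + 2*K*T1))"
          using e by (intro mult_left_mono add_mono o1 o2) auto
        finally show ?thesis .
      qed
      also have "\<dots> = \<gamma>*(g (Suc k) + g k) + 4*K*T1*\<epsilon>"
        using e by (simp add: field_simps)
      also have "\<dots> \<le> 2*\<gamma>*\<theta> + 4*K*T1*\<epsilon>"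
        using gk ga0 by (simp add: mult_left_mono)
      finally have qb: "norm (integral {g k..g (Suc k)} q) \<le> 2*\<gamma>*\<theta> + 4*K*T1*\<epsilon>" .
      have qi: "q integrable_on {g k..g (Suc k)}" using qint by blast
      have fi: "f integrable_on {g k..g (Suc k)}" using fsub gk by simp
      have db: "norm (integral {g k..g (Suc k)} (\<lambda>s. f s - q s)) \<le> (2*K*\<rho>) * (g (Suc k) - g k)"
      proof (rule int_bound_const[OF integrable_diff[OF fi qi] gk(2)])
        fix s assume s: "s \<in> {g k..g (Suc k)}"
        then have s': "s \<in> {0..\<theta>}" using gk by auto
        have gkin: "g k \<in> {0..\<theta>}" using gk by auto
        have "dist s (g k) < d" using s hd gS by (simp add: dist_real_def)
        then have dz: "norm (a s - z k) \<le> \<rho>"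
          using d[OF gkin s'] by (simp add: z_def dist_norm)
        have zk: "norm (z k) \<le> 2*R" using zb k by simp
        have "norm (f s - q s) \<le> norm (Fv \<Lambda> P (s/\<epsilon>) (a s) - Fv \<Lambda> P (s/\<epsilon>) (z k)) + norm (G (a s) - G (z k))"
          unfolding f_def q_def using norm_triangle_ineq4[of "Fv \<Lambda> P (s/\<epsilon>) (a s) - Fv \<Lambda> P (s/\<epsilon>) (z k)" "G (a s) - G (z k)"]
          by (simp add: algebra_simps)
        also have "\<dots> \<le> K * norm (a s - z k) + K * norm (a s - z k)"
          by (intro add_mono F_lipK G_lipK a_ball s' zk)
        also have "\<dots> \<le> K * \<rho> + K * \<rho>" using dz K0 by (intro add_mono mult_left_mono) auto
        finally show "norm (f s - q s) \<le> 2*K*\<rho>" by (simp add: mult_ac)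
      qed
      have "integral {g k..g (Suc k)} f = integral {g k..g (Suc k)} (\<lambda>s. f s - q s) + integral {g k..g (Suc k)} q"
        using integral_diff[OF fi qi] by simp
      then have "norm (integral {g k..g (Suc k)} f) \<le> norm (integral {g k..g (Suc k)} (\<lambda>s. f s - q s)) + norm (integral {g k..g (Suc k)} q)"
        by (simp add: norm_triangle_ineq)
      also have "\<dots> \<le> 2*K*\<rho>*h + (2*\<gamma>*\<theta> + 4*K*T1*\<epsilon>)"
        using db qb gS by simp
      finally show ?thesis by (simp add: c_def)
    qed
    have c0: "c \<ge> 0" using K0 rho0 h0 ga0 th0 T10 e by (simp add: c_def)
    have cum: "norm (integral {0..g m} f) \<le> real m * c" if "m \<le> N" for m
      using that
    proof (induction m)
      case 0 then show ?case by (simp add: g_def)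
    next
      case (Suc m)
      have gm: "0 \<le> g m" "g m \<le> g (Suc m)" "g (Suc m) \<le> \<theta>"
        using g0 gS h0 gle[OF Suc.prems] by auto
      have "integral {0..g (Suc m)} f = integral {0..g m} f + integral {g m..g (Suc m)} f"
        by (rule Henstock_Kurzweil_Integration.integral_combine[symmetric, OF gm(1,2) fsub]) (use gm in auto)
      then have "norm (integral {0..g (Suc m)} f) \<le> norm (integral {0..g m} f) + norm (integral {g m..g (Suc m)} f)"
        by (simp add: norm_triangle_ineq)
      also have "\<dots> \<le> real m * c + c" using Suc piece[of m] by (intro add_mono) auto
      finally show ?case by (simp add: algebra_simps)
    qed
    have main: "norm (integral {0..\<tau>} f) \<le> real N * c + 2*K*h"
    proof (cases "\<tau> = \<theta>")
      case True
      have "0 \<le> 2*K*h" using K0 h0 by simp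
      moreover have "norm (integral {0..\<tau>} f) \<le> real N * c" using cum[of N] gN True by simp
      ultimately show ?thesis by linarith
    next
      case False
      then have tl: "\<tau> < \<theta>" using tau by auto
      define m where "m = nat \<lfloor>\<tau>/h\<rfloor>"
      have fl0: "0 \<le> \<lfloor>\<tau>/h\<rfloor>" using tau h0 by simp
      have mr: "real m = of_int \<lfloor>\<tau>/h\<rfloor>" using fl0 by (simp add: m_def)
      have m1: "real m * h \<le> \<tau>" using mr h0 by (metis floor_divide_lower)
      have m2: "\<tau> < (real m + 1) * h" using mr h0 by (metis floor_divide_upper)
      have mN: "m < N"
      proof -
        have "real m * h < real N * h" using m1 tl gN by (simp add: g_def)
        then show ?thesis using h0 by simp
      qed
      have gm: "0 \<le> g m" "g m \<le> \<tau>" "\<tau> \<le> \<theta>" using g0 m1 tau by (auto simp: g_def)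
      have "integral {0..\<tau>} f = integral {0..g m} f + integral {g m..\<tau>} f"
        by (rule Henstock_Kurzweil_Integration.integral_combine[symmetric, OF gm(1,2) fsub]) (use gm in auto)
      then have "norm (integral {0..\<tau>} f) \<le> norm (integral {0..g m} f) + norm (integral {g m..\<tau>} f)"
        by (simp add: norm_triangle_ineq)
      also have "\<dots> \<le> real m * c + 2*K * (\<tau> - g m)"
      proof (rule add_mono)
        show "norm (integral {0..g m} f) \<le> real m * c" using cum mN by simp
        show "norm (integral {g m..\<tau>} f) \<le> 2*K * (\<tau> - g m)"
          by (rule int_bound_const[OF fsub[OF gm(1,3)] gm(2) fb]) (use gm in auto)
      qed
      also have "\<dots> \<le> real N * c + 2*K*h"
      proof (rule add_mono)
        show "real m * c \<le> real N * c" using mN c0 by (simp add: mult_right_mono)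
        have "\<tau> - g m \<le> h" using m2 by (simp add: g_def algebra_simps)
        then show "2*K * (\<tau> - g m) \<le> 2*K*h" using K0 by simp
      qed
      finally show ?thesis .
    qed
    have bound: "real N * c + 2*K*h \<le> \<eta>"
    proof -
      have a1: "real N * (2*K*\<rho>*h) = \<eta>/4" using N0 K0 th0 by (simp add: \<rho>_def h_def field_simps)
      have a2: "real N * (2*\<gamma>*\<theta>) = \<eta>/4" using N0 th0 by (simp add: \<gamma>_def field_simps)
      have a3: "real N * (4*K*T1*\<epsilon>) \<le> \<eta>/4"
      proof -
        have "real N * (4*K*T1*\<epsilon>) \<le> real N * (4*K*T1*\<epsilon>0)"
          using ee N0 K0 T10 by (intro mult_left_mono) auto
        also have "\<dots> = \<eta>/4" using N0 K0 T10 by (simp add: \<epsilon>0_def field_simps)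
        finally show ?thesis .
      qed
      have "real N * c = real N * (2*K*\<rho>*h) + real N * (2*\<gamma>*\<theta>) + real N * (4*K*T1*\<epsilon>)"
        by (simp add: c_def algebra_simps)
      then show ?thesis using a1 a2 a3 hK by linarith
    qed
    have fe: "(\<lambda>s. Fv \<Lambda> P (s/\<epsilon>) (a s) - G (a s)) = f" by (simp add: f_def fun_eq_iff)
    show "norm (integral {0..\<tau>} (\<lambda>s. Fv \<Lambda> P (s/\<epsilon>) (a s) - G (a s))) \<le> \<eta>"
      unfolding fe using main bound by linarith
  qed
qed

end

context avsetup begin

lemma fwd:
  fixes v :: "real \<Rightarrow> real \<Rightarrow> complex^'n"
  assumes v_init: "\<forall>\<epsilon>>0. v \<epsilon> 0 = v0"
    and vd: "\<forall>\<epsilon>>0. \<forall>t\<in>{0..\<theta>/\<epsilon>}. (v \<epsilon> has_vector_derivative (\<chi> j. - \<i> * complex_of_real (\<Lambda> $ j) * (v \<epsilon> t $ j)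
                 + complex_of_real \<epsilon> * (P (v \<epsilon> t) $ j))) (at t within {0..\<theta>/\<epsilon>})"
    and eta: "\<eta> > 0"
  shows "\<forall>\<^sub>F \<epsilon> in at_right 0. \<forall>t\<in>{0..\<theta>/\<epsilon>}. norm (Phi (t *\<^sub>R \<Lambda>) (v \<epsilon> t) - a (\<epsilon> * t)) \<le> \<eta>"
proof -
  define \<eta>' where "\<eta>' = \<eta> / (2 * exp (2*K*\<theta>))"
  have e'0: "\<eta>' > 0" using eta by (simp add: \<eta>'_def)
  have e'v: "2 * \<eta>' * exp (2*K*\<theta>) = \<eta>" by (simp add: \<eta>'_def)
  have "\<forall>\<^sub>F \<epsilon> in at_right 0. \<forall>\<tau>\<in>{0..\<theta>}. norm (integral {0..\<tau>} (\<lambda>s. Fv \<Lambda> P (s/\<epsilon>) (a s) - G (a s))) \<le> \<eta>'"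
    by (rule delta_small[OF e'0])
  moreover have "\<forall>\<^sub>F \<epsilon> in at_right (0::real). \<epsilon> > 0" by (rule eventually_at_right_less)
  ultimately show ?thesis
  proof eventually_elim
    case (elim \<epsilon>)
    then have e: "\<epsilon> > 0" and dl: "\<And>\<tau>. \<tau>\<in>{0..\<theta>} \<Longrightarrow> norm (integral {0..\<tau>} (\<lambda>s. Fv \<Lambda> P (s/\<epsilon>) (a s) - G (a s))) \<le> \<eta>'"
      by auto
    define b where "b \<tau> = Phi ((\<tau>/\<epsilon>) *\<^sub>R \<Lambda>) (v \<epsilon> (\<tau>/\<epsilon>))" for \<tau>
    have bder: "(b has_vector_derivative Fv \<Lambda> P (\<tau>/\<epsilon>) (b \<tau>)) (at \<tau> within {0..\<theta>})" if "\<tau> \<in> {0..\<theta>}" for \<tau>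
    proof -
      have vde: "\<forall>t\<in>{0..\<theta>/\<epsilon>}. (v \<epsilon> has_vector_derivative (\<chi> j. - \<i> * complex_of_real (\<Lambda> $ j) * (v \<epsilon> t $ j)
                 + complex_of_real \<epsilon> * (P (v \<epsilon> t) $ j))) (at t within {0..\<theta>/\<epsilon>})"
        using vd e by blast
      show ?thesis unfolding b_def[abs_def] using b_deriv[OF e less_imp_le[OF th_pos] vde that] by simp
    qed
    have b0: "b 0 = v0" using v_init e by (simp add: b_def Phi_zero)
    show ?case
    proof
      fix t assume t: "t \<in> {0..\<theta>/\<epsilon>}"
      have tau: "\<epsilon> * t \<in> {0..\<theta>}" using t e by (auto simp: field_simps)
      have "b (\<epsilon> * t) = Phi (t *\<^sub>R \<Lambda>) (v \<epsilon> t)" using e by (simp add: b_def)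
      then show "norm (Phi (t *\<^sub>R \<Lambda>) (v \<epsilon> t) - a (\<epsilon> * t)) \<le> \<eta>"
        using err_bound[OF e b0 bder dl less_imp_le[OF e'0] tau] e'v by simp
    qed
  qed
qed

end

lemma Phi_neg: "Phi w (- x) = - Phi w x" by (simp add: Phi_def vec_eq_iff)

lemma Fv_refl: "Fv (- \<Lambda>) (\<lambda>z. - P z) t z = - Fv \<Lambda> P (-t) z"
proof -
  have "t *\<^sub>R (- \<Lambda>) = (-t) *\<^sub>R \<Lambda>" by simp
  then show ?thesis by (simp add: Fv_def Phi_neg)
qed

lemma Lip_neg: assumes L: "Lip_X X P" shows "Lip_X X (\<lambda>z. - P z)"
proof -
  have e: "norm (- P x - - P y) = norm (P x - P y)" for x y by (simp add: norm_minus_commute)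
  show ?thesis using L unfolding Lip_X_def e by (auto intro: continuous_on_minus)
qed


lemma comp_bound:
  fixes x y :: "complex^'n"
  assumes "norm (x - y) \<le> \<eta>"
  shows "\<bar>norm (x $ j) - norm (y $ j)\<bar> \<le> \<eta>"
proof -
  have "\<bar>norm (x $ j) - norm (y $ j)\<bar> \<le> norm (x $ j - y $ j)" by (rule norm_triangle_ineq3)
  also have "\<dots> = norm ((x - y) $ j)" by simp
  also have "\<dots> \<le> norm (x - y)" by (rule Finite_Cartesian_Product.norm_nth_le)
  finally show ?thesis using assms by simp
qed

theorem corollary4p1:
  fixes \<Lambda> :: "real^'n"
    and P :: "complex^'n \<Rightarrow> complex^'n"
    and X :: "real \<Rightarrow> real"
    and v0 :: "complex^'n"
    and R \<theta> :: real
    and a :: "real \<Rightarrow> complex^'n"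
    and v :: "real \<Rightarrow> real \<Rightarrow> complex^'n"
  assumes \<Lambda>_nz: "\<forall>j. \<Lambda> $ j \<noteq> 0"
    and X_mono: "mono_on {0..} X" and X_cont: "continuous_on {0..} X" and X_nonneg: "\<forall>r\<ge>0. X r \<ge> 0"
    and P_Lip: "Lip_X X P"
    and R_def: "norm v0 = R" and R_pos: "R > 0"
    and X2R: "X (2 * R) > 0"
    and \<theta>_def: "\<theta> = R / X (2 * R)"
    and a_init: "a 0 = v0"
    and a_ode: "\<forall>\<tau>\<in>{-\<theta>..\<theta>}. (a has_vector_derivative avg \<Lambda> P (a \<tau>)) (at \<tau> within {-\<theta>..\<theta>})"
    and v_init: "\<forall>\<epsilon>>0. v \<epsilon> 0 = v0"
    and v_ode: "\<forall>\<epsilon>>0. \<forall>t\<in>{-\<theta>/\<epsilon>..\<theta>/\<epsilon>}.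
        (v \<epsilon> has_vector_derivative
           (\<chi> j. - \<i> * complex_of_real (\<Lambda> $ j) * (v \<epsilon> t $ j)
                 + complex_of_real \<epsilon> * (P (v \<epsilon> t) $ j)))
        (at t within {-\<theta>/\<epsilon>..\<theta>/\<epsilon>})"
  shows "\<forall>j. ((\<lambda>\<epsilon>. SUP t\<in>{-\<theta>/\<epsilon>..\<theta>/\<epsilon>}. \<bar>norm (v \<epsilon> t $ j) - norm (a (\<epsilon> * t) $ j)\<bar>)
              \<longlongrightarrow> 0) (at_right 0)"
proof -
  have cP: "continuous_on UNIV P" using LipD(3)[OF P_Lip, of 0] by simp
  have hm: "has_mean (\<lambda>t. Fv \<Lambda> P t z) (avg \<Lambda> P z)" for z by (rule Fv_mean[OF cP])
  have th0: "\<theta> > 0" using R_pos X2R \<theta>_def by simp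
  interpret F: avsetup \<Lambda> P X v0 R \<theta> "avg \<Lambda> P" a
  proof
    show "mean_fwd (\<lambda>t. Fv \<Lambda> P t z) (avg \<Lambda> P z)" for z using hm[of z] by (simp add: has_mean_def)
    show "(a has_vector_derivative avg \<Lambda> P (a \<tau>)) (at \<tau> within {0..\<theta>})" if "\<tau> \<in> {0..\<theta>}" for \<tau>
      by (rule has_vector_derivative_within_subset[OF a_ode[rule_format]]) (use that in auto)
  qed (simp_all only: P_Lip R_def R_pos X2R \<theta>_def a_init)
  interpret B: avsetup "- \<Lambda>" "\<lambda>z. - P z" X v0 R \<theta> "\<lambda>z. - avg \<Lambda> P z" "\<lambda>\<tau>. a (- \<tau>)"
  proof
    show "Lip_X X (\<lambda>z. - P z)" by (rule Lip_neg[OF P_Lip])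
    show "mean_fwd (\<lambda>t. Fv (- \<Lambda>) (\<lambda>z. - P z) t z) (- avg \<Lambda> P z)" for z
    proof -
      have m: "mean_fwd (\<lambda>t. Fv \<Lambda> P (-t) z) (avg \<Lambda> P z)" using hm[of z] by (simp add: has_mean_def)
      have c: "continuous_on UNIV (\<lambda>t. Fv \<Lambda> P (-t) z)"
        by (rule cont_Fv[OF cP]) (auto intro: continuous_intros)
      show ?thesis unfolding Fv_refl
        by (rule mean_fwd_linear[OF bounded_linear_minus[OF bounded_linear_ident] c m])
    qed
    show "((\<lambda>\<tau>. a (- \<tau>)) has_vector_derivative - avg \<Lambda> P (a (- \<tau>))) (at \<tau> within {0..\<theta>})"
      if t: "\<tau> \<in> {0..\<theta>}" for \<tau>
    proof -
      have d1: "(uminus has_vector_derivative -1) (at \<tau> within {0..\<theta>})"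
        unfolding has_real_derivative_iff_has_vector_derivative[symmetric]
        by (auto intro!: derivative_eq_intros)
      have d2: "(a has_vector_derivative avg \<Lambda> P (a (- \<tau>))) (at (- \<tau>) within uminus ` {0..\<theta>})"
        by (rule has_vector_derivative_within_subset[OF a_ode[rule_format]]) (use t in auto)
      have "(a \<circ> uminus has_vector_derivative (-1) *\<^sub>R avg \<Lambda> P (a (- \<tau>))) (at \<tau> within {0..\<theta>})"
        by (rule vector_diff_chain_within[OF d1 d2])
      then show ?thesis by (simp add: o_def)
    qed
  qed (simp_all only: R_def R_pos X2R \<theta>_def a_init minus_zero)
  have vd0: "\<forall>\<epsilon>>0. \<forall>t\<in>{0..\<theta>/\<epsilon>}. (v \<epsilon> has_vector_derivative (\<chi> j. - \<i> * complex_of_real (\<Lambda> $ j) * (v \<epsilon> t $ j)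
                 + complex_of_real \<epsilon> * (P (v \<epsilon> t) $ j))) (at t within {0..\<theta>/\<epsilon>})"
  proof (intro allI impI ballI)
    fix \<epsilon> t :: real assume e: "\<epsilon> > 0" and t: "t \<in> {0..\<theta>/\<epsilon>}"
    have tt: "t \<in> {-\<theta>/\<epsilon>..\<theta>/\<epsilon>}" using t th0 e by auto
    have "(v \<epsilon> has_vector_derivative (\<chi> j. - \<i> * complex_of_real (\<Lambda> $ j) * (v \<epsilon> t $ j)
                 + complex_of_real \<epsilon> * (P (v \<epsilon> t) $ j))) (at t within {-\<theta>/\<epsilon>..\<theta>/\<epsilon>})"
      using v_ode e tt by blast
    then show "(v \<epsilon> has_vector_derivative (\<chi> j. - \<i> * complex_of_real (\<Lambda> $ j) * (v \<epsilon> t $ j)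
                 + complex_of_real \<epsilon> * (P (v \<epsilon> t) $ j))) (at t within {0..\<theta>/\<epsilon>})"
      by (rule has_vector_derivative_within_subset) (use th0 e in \<open>auto simp: divide_nonneg_pos\<close>)
  qed
  have vd1: "\<forall>\<epsilon>>0. \<forall>t\<in>{0..\<theta>/\<epsilon>}. ((\<lambda>t. v \<epsilon> (-t)) has_vector_derivative (\<chi> j. - \<i> * complex_of_real ((- \<Lambda>) $ j) * (v \<epsilon> (-t) $ j)
                 + complex_of_real \<epsilon> * ((\<lambda>z. - P z) (v \<epsilon> (-t)) $ j))) (at t within {0..\<theta>/\<epsilon>})"
  proof (intro allI impI ballI)
    fix \<epsilon> t :: real assume e: "\<epsilon> > 0" and t: "t \<in> {0..\<theta>/\<epsilon>}"
    have d1: "(uminus has_vector_derivative -1) (at t within {0..\<theta>/\<epsilon>})"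
      unfolding has_real_derivative_iff_has_vector_derivative[symmetric]
      by (auto intro!: derivative_eq_intros)
    have tt: "-t \<in> {-\<theta>/\<epsilon>..\<theta>/\<epsilon>}" using t th0 e by auto
    have "(v \<epsilon> has_vector_derivative (\<chi> j. - \<i> * complex_of_real (\<Lambda> $ j) * (v \<epsilon> (-t) $ j)
                 + complex_of_real \<epsilon> * (P (v \<epsilon> (-t)) $ j))) (at (-t) within {-\<theta>/\<epsilon>..\<theta>/\<epsilon>})"
      using v_ode e tt by blast
    then have d2: "(v \<epsilon> has_vector_derivative (\<chi> j. - \<i> * complex_of_real (\<Lambda> $ j) * (v \<epsilon> (-t) $ j)
                 + complex_of_real \<epsilon> * (P (v \<epsilon> (-t)) $ j))) (at (-t) within uminus ` {0..\<theta>/\<epsilon>})"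
      by (rule has_vector_derivative_within_subset) (use th0 e in \<open>auto simp: divide_nonneg_pos\<close>)
    have "(v \<epsilon> \<circ> uminus has_vector_derivative (-1) *\<^sub>R (\<chi> j. - \<i> * complex_of_real (\<Lambda> $ j) * (v \<epsilon> (-t) $ j)
                 + complex_of_real \<epsilon> * (P (v \<epsilon> (-t)) $ j))) (at t within {0..\<theta>/\<epsilon>})"
      by (rule vector_diff_chain_within[OF d1 d2])
    moreover have "(-1::real) *\<^sub>R (\<chi> j. - \<i> * complex_of_real (\<Lambda> $ j) * (v \<epsilon> (-t) $ j)
                 + complex_of_real \<epsilon> * (P (v \<epsilon> (-t)) $ j))
        = (\<chi> j. - \<i> * complex_of_real ((- \<Lambda>) $ j) * (v \<epsilon> (-t) $ j)
                 + complex_of_real \<epsilon> * ((\<lambda>z. - P z) (v \<epsilon> (-t)) $ j))"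
      by (simp add: vec_eq_iff algebra_simps)
    ultimately show "((\<lambda>t. v \<epsilon> (-t)) has_vector_derivative (\<chi> j. - \<i> * complex_of_real ((- \<Lambda>) $ j) * (v \<epsilon> (-t) $ j)
                 + complex_of_real \<epsilon> * ((\<lambda>z. - P z) (v \<epsilon> (-t)) $ j))) (at t within {0..\<theta>/\<epsilon>})"
      by (simp add: o_def)
  qed
  have vi1: "\<forall>\<epsilon>>0. v \<epsilon> (-0) = v0" using v_init by simp
  show ?thesis
  proof (intro allI tendstoI)
    fix j and e :: real assume e: "e > 0"
    have e2: "e/2 > 0" using e by simp
    have fw: "\<forall>\<^sub>F \<epsilon> in at_right 0. \<forall>t\<in>{0..\<theta>/\<epsilon>}. norm (Phi (t *\<^sub>R \<Lambda>) (v \<epsilon> t) - a (\<epsilon> * t)) \<le> e/2"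
      by (rule F.fwd[OF v_init vd0 e2])
    have bw: "\<forall>\<^sub>F \<epsilon> in at_right 0. \<forall>t\<in>{0..\<theta>/\<epsilon>}. norm (Phi (t *\<^sub>R (- \<Lambda>)) (v \<epsilon> (-t)) - a (- (\<epsilon> * t))) \<le> e/2"
      using B.fwd[of "\<lambda>\<epsilon> t. v \<epsilon> (-t)", OF vi1 vd1 e2] by simp
    show "\<forall>\<^sub>F \<epsilon> in at_right 0. dist (SUP t\<in>{-\<theta>/\<epsilon>..\<theta>/\<epsilon>}. \<bar>norm (v \<epsilon> t $ j) - norm (a (\<epsilon> * t) $ j)\<bar>) 0 < e"
      using fw bw eventually_at_right_less[of "0::real"]
    proof eventually_elim
      case (elim \<epsilon>)
      define S where "S = {-\<theta>/\<epsilon>..\<theta>/\<epsilon>}"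
      define f where "f t = \<bar>norm (v \<epsilon> t $ j) - norm (a (\<epsilon> * t) $ j)\<bar>" for t
      have fb: "f t \<le> e/2" if t: "t \<in> S" for t
      proof (cases "t \<ge> 0")
        case True
        then have "t \<in> {0..\<theta>/\<epsilon>}" using t by (auto simp: S_def)
        then have "norm (Phi (t *\<^sub>R \<Lambda>) (v \<epsilon> t) - a (\<epsilon> * t)) \<le> e/2" using elim(1) by blast
        from comp_bound[OF this, of j] show ?thesis by (simp add: f_def norm_Phi_nth)
      next
        case False
        then have "-t \<in> {0..\<theta>/\<epsilon>}" using t by (auto simp: S_def)
        then have "norm (Phi ((-t) *\<^sub>R (- \<Lambda>)) (v \<epsilon> (- (-t))) - a (- (\<epsilon> * (-t)))) \<le> e/2" using elim(2) by blast
        from comp_bound[OF this, of j] show ?thesis by (simp add: f_def norm_Phi_nth)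
      qed
      have ne: "S \<noteq> {}" using th0 elim(3) by (auto simp: S_def)
      have bdd: "bdd_above (f ` S)" by (rule bdd_aboveI2[where M="e/2"]) (rule fb)
      have up: "(SUP t\<in>S. f t) \<le> e/2" by (rule cSUP_least[OF ne fb])
      have "0 \<in> S" using th0 elim(3) by (auto simp: S_def)
      then have lo: "f 0 \<le> (SUP t\<in>S. f t)" by (rule cSUP_upper[OF _ bdd])
      have "f 0 \<ge> 0" by (simp add: f_def)
      then have "dist (SUP t\<in>S. f t) 0 < e" using up lo e by (simp add: dist_real_def)
      then show ?case by (simp add: S_def f_def)
    qed
  qed
qed


end
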